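(* Let $n\ge 3$ and let $g_*$ be the round metric of sectional curvature $1$ on $S^n$. For $i=1,2$ let $f_i:[a_i,b_i]\to\mathbb{R}$ be smooth functions such that (I) $f_i>0$, $f_i'>0$ and $f_i''>0$ on $[a_i,b_i]$; (II) the metric $dt^2+f_i(t)^2g_*$ on $[a_i,b_i]\times S^n$ has positive scalar curvature; (III) $f_1(b_1)<f_2(a_2)$ and $f_1'(b_1)=f_2'(a_2)$. Suppose the intervals are positioned (after translation) so that $a_2-b_1=(f_2(a_2)-f_1(b_1))/f_1'(b_1)$. Then there exists a smooth function $f:[a_1,b_2]\to\mathbb{R}$ such that (i) $f>0$ and $f'>0$ on $[a_1,b_2]$; (ii) $f=f_1$ on $[a_1,\frac{a_1+b_1}{2}]$; (iii) $f=f_2$ on $[\frac{a_2+b_2}{2},b_2]$; (iv) the metric $dt^2+f(t)^2g_*$ on $[a_1,b_2]\times S^n$ has positive scalar curvature. *)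

theory Defs
  imports Complex_Main
begin

text \<open>A smooth function on a closed interval [a,b], given together with its
  sequence of derivatives: D 0 is the function, D (Suc k) is the derivative of D k
  (one-sided at the endpoints, i.e. derivative within [a,b]).\<close>
definition smooth_jet_on :: "(nat \<Rightarrow> real \<Rightarrow> real) \<Rightarrow> real \<Rightarrow> real \<Rightarrow> bool" where
  "smooth_jet_on D a b \<longleftrightarrow>
     (\<forall>k. \<forall>x\<in>{a..b}. (D k has_real_derivative D (Suc k) x) (at x within {a..b}))"

text \<open>Scalar curvature of the warped product dt^2 + f(t)^2 g_* on I x S^n,
  g_* the round metric of sectional curvature 1, at a point with
  f = y, f' = y', f'' = y''.\<close>
definition warped_scal :: "nat \<Rightarrow> real \<Rightarrow> real \<Rightarrow> real \<Rightarrow> real" where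
  "warped_scal n y y' y'' =
     - 2 * real n * y'' / y + real n * (real n - 1) * (1 - y'^2) / y^2"

definition warped_psc :: "nat \<Rightarrow> (nat \<Rightarrow> real \<Rightarrow> real) \<Rightarrow> real \<Rightarrow> real \<Rightarrow> bool" where
  "warped_psc n D a b \<longleftrightarrow> (\<forall>t\<in>{a..b}. warped_scal n (D 0 t) (D 1 t) (D 2 t) > 0)"

end

theory Submission
  imports Defs "HOL-Analysis.Analysis" "HOL-Computational_Algebra.Polynomial"
begin


definition jet :: "(nat \<Rightarrow> real \<Rightarrow> real) \<Rightarrow> real set \<Rightarrow> bool" where
  "jet D S \<longleftrightarrow> (\<forall>k. \<forall>x\<in>S. (D k has_real_derivative D (Suc k) x) (at x within S))"

lemma smooth_jet_on_jet: "smooth_jet_on D a b = jet D {a..b}"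
  by (simp add: smooth_jet_on_def jet_def)

lemma jetD: "jet D S \<Longrightarrow> x \<in> S \<Longrightarrow> (D k has_real_derivative D (Suc k) x) (at x within S)"
  by (simp add: jet_def)

lemma jet_subset: "jet D T \<Longrightarrow> S \<subseteq> T \<Longrightarrow> jet D S"
  unfolding jet_def by (meson DERIV_subset subsetD)

lemma jet_add: "jet D S \<Longrightarrow> jet E S \<Longrightarrow> jet (\<lambda>k x. D k x + E k x) S"
  unfolding jet_def by (auto intro: derivative_intros)

lemma jet_cmult: "jet D S \<Longrightarrow> jet (\<lambda>k x. c * D k x) S"
  unfolding jet_def by (auto intro: DERIV_cmult)

lemma jet_const: "jet (\<lambda>k x. if k = 0 then c else 0) S"
  unfolding jet_def by (auto intro: derivative_intros)

lemma jet_quad: "jet (\<lambda>k x. if k = 0 then A + B * x + C * x^2 else if k = 1 then B + 2 * C * x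
      else if k = 2 then 2 * C else 0) S"
  unfolding jet_def
proof (intro allI ballI)
  fix k x
  show "((\<lambda>x. if k = 0 then A + B * x + C * x^2 else if k = 1 then B + 2 * C * x
      else if k = 2 then 2 * C else 0) has_real_derivative
     (if Suc k = 0 then A + B * x + C * x^2 else if Suc k = 1 then B + 2 * C * x
      else if Suc k = 2 then 2 * C else 0)) (at x within S)"
    by (cases "k = 0"; cases "k = 1"; cases "k = 2"; simp; (rule derivative_eq_intros refl | simp)+)
qed

lemma jet_affine:
  assumes "jet D UNIV"
  shows "jet (\<lambda>k x. \<alpha>^k * D k (\<alpha> * x + \<beta>)) S"
  unfolding jet_def
proof (intro allI ballI)
  fix k x
  have d: "(D k has_real_derivative D (Suc k) (\<alpha> * x + \<beta>)) (at (\<alpha> * x + \<beta>))"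
    using assms by (simp add: jet_def)
  have "((\<lambda>x. D k (\<alpha> * x + \<beta>)) has_real_derivative D (Suc k) (\<alpha> * x + \<beta>) * \<alpha>) (at x within S)"
  proof -
    have d2: "((\<lambda>x. \<alpha> * x + \<beta>) has_real_derivative \<alpha>) (at x within S)"
      by (rule derivative_eq_intros refl | simp)+
    show ?thesis using DERIV_chain2[OF d d2] .
  qed
  from DERIV_cmult[OF this, of "\<alpha>^k"]
  show "((\<lambda>x. \<alpha>^k * D k (\<alpha> * x + \<beta>)) has_real_derivative \<alpha>^Suc k * D (Suc k) (\<alpha> * x + \<beta>)) (at x within S)"
    by (simp add: algebra_simps)
qed

lemma Suc_choose': "Suc n choose k = (n choose k) + (if k = 0 then 0 else (n choose (k-1)))"
  by (cases k) simp_all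

lemma jet_mult:
  assumes "jet D S" "jet E S"
  shows "jet (\<lambda>k x. \<Sum>i = 0..k. of_nat (k choose i) * D i x * E (k - i) x) S"
  unfolding jet_def
proof (intro allI ballI)
  fix n x assume x: "x \<in> S"
  have sumeq: "(\<Sum>i = 0..n.
               of_nat (n choose i) * (D (Suc i) x * E (n-i) x + D i x * E (Suc (n-i)) x)) =
            (\<Sum>i = 0..Suc n. of_nat (Suc n choose i) * D i x * E (Suc n - i) x)"
    apply (simp add: Suc_choose' algebra_simps sum.distrib)
    apply (subst (4) sum_Suc_reindex)
    apply (auto simp: algebra_simps Suc_diff_le intro: sum.cong)
    done
  have "((\<lambda>x. \<Sum>i = 0..n. of_nat (n choose i) * D i x * E (n - i) x) has_real_derivative
     (\<Sum>i = 0..n. of_nat (n choose i) * (D (Suc i) x * E (n-i) x + D i x * E (Suc (n-i)) x))) (at x within S)"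
  proof (rule DERIV_sum)
    fix i
    have "((\<lambda>x. D i x * E (n - i) x) has_real_derivative
       (D (Suc i) x * E (n-i) x + D i x * E (Suc (n-i)) x)) (at x within S)"
      using DERIV_mult[OF jetD[OF assms(1) x, of i] jetD[OF assms(2) x, of "n-i"]] by (simp add: mult.commute)
    from DERIV_cmult[OF this, of "of_nat (n choose i)"]
    show "((\<lambda>x. of_nat (n choose i) * D i x * E (n - i) x) has_real_derivative
       of_nat (n choose i) * (D (Suc i) x * E (n-i) x + D i x * E (Suc (n-i)) x)) (at x within S)"
      by (simp add: mult.assoc)
  qed
  then show "((\<lambda>x. \<Sum>i = 0..n. of_nat (n choose i) * D i x * E (n - i) x) has_real_derivative
     (\<Sum>i = 0..Suc n. of_nat (Suc n choose i) * D i x * E (Suc n - i) x)) (at x within S)"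
    using sumeq by simp
qed

lemma jet_cong:
  assumes "jet D S" "\<And>k x. x \<in> S \<Longrightarrow> E k x = D k x"
  shows "jet E S"
  unfolding jet_def
proof (intro allI ballI)
  fix k x assume x: "x \<in> S"
  have "(D k has_real_derivative D (Suc k) x) (at x within S)" using assms x by (simp add: jet_def)
  then have "(E k has_real_derivative D (Suc k) x) (at x within S)"
    by (rule has_field_derivative_transform_within[OF _ zero_less_one x]) (simp add: assms)
  then show "(E k has_real_derivative E (Suc k) x) (at x within S)" using assms x by simp
qed

lemma jet_continuous: "jet D S \<Longrightarrow> continuous_on S (D k)"
  unfolding jet_def continuous_on_eq_continuous_within
  using DERIV_continuous by blast

lemma jet_bounded:
  assumes "jet D {a..b}"
  shows "\<exists>B. \<forall>x\<in>{a..b}. \<bar>D k x\<bar> \<le> B"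
proof -
  have "compact (D k ` {a..b})"
    by (rule compact_continuous_image[OF jet_continuous[OF assms]]) simp
  then obtain B where "\<forall>y\<in>D k ` {a..b}. norm y \<le> B"
    using compact_imp_bounded bounded_iff by metis
  then show ?thesis by auto
qed

lemma deriv_upper:
  assumes "a \<le> b" "\<And>x. x \<in> {a..b} \<Longrightarrow> (f has_real_derivative f' x) (at x within {a..b})"
    "\<And>x. x \<in> {a..b} \<Longrightarrow> f' x \<le> B"
  shows "f b - f a \<le> B * (b - a)"
proof -
  let ?g = "\<lambda>x. B * x - f x"
  have "?g a \<le> ?g b"
  proof (rule DERIV_nonneg_imp_increasing_open[OF assms(1)])
    fix x assume x: "a < x" "x < b"
    then have "x \<in> interior {a..b}" by simp
    then have "(f has_real_derivative f' x) (at x)"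
      using assms(2)[of x] x at_within_interior by fastforce
    then have "(?g has_real_derivative B - f' x) (at x)"
      by (auto intro!: derivative_eq_intros)
    then show "\<exists>y. (?g has_real_derivative y) (at x) \<and> 0 \<le> y" using assms(3)[of x] x by auto
  next
    have "continuous_on {a..b} f"
      unfolding continuous_on_eq_continuous_within using assms(2) DERIV_continuous by blast
    then show "continuous_on {a..b} ?g" by (intro continuous_intros)
  qed
  then show ?thesis by (simp add: algebra_simps)
qed

lemma deriv_lower:
  assumes "a \<le> b" "\<And>x. x \<in> {a..b} \<Longrightarrow> (f has_real_derivative f' x) (at x within {a..b})"
    "\<And>x. x \<in> {a..b} \<Longrightarrow> B \<le> f' x"
  shows "B * (b - a) \<le> f b - f a"
proof -
  have "(-f) b - (-f) a \<le> (-B) * (b - a)"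
  proof (rule deriv_upper[of a b _ "\<lambda>x. - f' x"])
    show "\<And>x. x \<in> {a..b} \<Longrightarrow> ((- f) has_real_derivative - f' x) (at x within {a..b})"
      unfolding fun_Compl_def by (rule DERIV_minus) (use assms in auto)
  qed (use assms in auto)
  then show ?thesis by (simp add: algebra_simps)
qed

lemma deriv_abs:
  assumes "a \<le> b" "\<And>x. x \<in> {a..b} \<Longrightarrow> (f has_real_derivative f' x) (at x within {a..b})"
    "\<And>x. x \<in> {a..b} \<Longrightarrow> \<bar>f' x\<bar> \<le> B"
  shows "\<bar>f b - f a\<bar> \<le> B * (b - a)"
proof -
  have "f b - f a \<le> B * (b - a)" by (rule deriv_upper[OF assms(1,2)]) (use assms(3) abs_le_D1 in blast)+
  moreover have "(-B) * (b - a) \<le> f b - f a" by (rule deriv_lower[OF assms(1,2)]) (use assms(3) abs_le_iff in force)+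
  ultimately show ?thesis by (simp add: abs_le_iff)
qed

lemma jet_sub_deriv: "jet D S \<Longrightarrow> {c..d} \<subseteq> S \<Longrightarrow> x \<in> {c..d} \<Longrightarrow>
   (D k has_real_derivative D (Suc k) x) (at x within {c..d})"
  using jet_subset jetD by blast


lemma at_within_far:
  fixes x :: real
  assumes "\<And>y. y \<in> S \<Longrightarrow> d \<le> dist y x" "0 < d"
  shows "at x within S = bot"
proof -
  have "eventually (\<lambda>y. False) (at x within S)"
    unfolding eventually_at using assms by force
  then show ?thesis by (simp add: eventually_False)
qed

lemma deriv_within_Un:
  assumes "(f has_real_derivative D) (at x within S)" "(f has_real_derivative D) (at x within T)"
  shows "(f has_real_derivative D) (at x within (S \<union> T))"
  using assms unfolding has_field_derivative_iff by (simp add: Lim_within_Un)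

lemma deriv_bot: "at x within S = bot \<Longrightarrow> (f has_real_derivative D) (at x within S)"
  unfolding has_field_derivative_iff by simp

lemma jet_glue:
  assumes ab: "a \<le> b" and bc: "b \<le> c" and D: "jet D {a..b}" and E: "jet E {b..c}"
    and eq: "\<And>k. D k b = E k b"
  shows "jet (\<lambda>k x. if x \<le> b then D k x else E k x) {a..c}"
  unfolding jet_def
proof (intro allI ballI)
  fix k x assume x: "x \<in> {a..c}"
  let ?G = "\<lambda>k x. if x \<le> b then D k x else E k x"
  have un: "{a..c} = {a..b} \<union> {b..c}" using ab bc by auto
  show "(?G k has_real_derivative ?G (Suc k) x) (at x within {a..c})"
  proof (cases "x \<le> b")
    case True
    have d1: "(?G k has_real_derivative D (Suc k) x) (at x within {a..b})"
      by (rule has_field_derivative_transform_within[OF jetD[OF D] zero_less_one]) (use x True in auto)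
    have d2: "(?G k has_real_derivative D (Suc k) x) (at x within {b..c})"
    proof (cases "x = b")
      case True
      have "(?G k has_real_derivative E (Suc k) b) (at b within {b..c})"
        by (rule has_field_derivative_transform_within[OF jetD[OF E] zero_less_one])
           (use bc eq in \<open>auto\<close>)
      then show ?thesis using True eq by simp
    next
      case False
      then have "x < b" using \<open>x \<le> b\<close> by simp
      then have "at x within {b..c} = bot"
        by (intro at_within_far[of _ "b - x"]) (auto simp: dist_real_def)
      then show ?thesis by (rule deriv_bot)
    qed
    show ?thesis using deriv_within_Un[OF d1 d2] True un by simp
  next
    case False
    have d2: "(?G k has_real_derivative E (Suc k) x) (at x within {b..c})"
      by (rule has_field_derivative_transform_within[OF jetD[OF E] zero_less_one])
         (use x False eq in auto)
    have "at x within {a..b} = bot"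
      using False by (intro at_within_far[of _ "x - b"]) (auto simp: dist_real_def)
    then have d1: "(?G k has_real_derivative E (Suc k) x) (at x within {a..b})" by (rule deriv_bot)
    show ?thesis using deriv_within_Un[OF d1 d2] False un by simp
  qed
qed

lemma jet_antideriv:
  assumes g: "jet D UNIV" and z: "\<And>u. u \<le> 0 \<Longrightarrow> D 0 u = 0"
  shows "jet (\<lambda>k x. if k = 0 then integral {-1..x} (D 0) else D (k - 1) x) UNIV"
    and "\<And>u. u \<le> 0 \<Longrightarrow> integral {-1..u} (D 0) = 0"
proof -
  have cont: "continuous_on UNIV (D 0)" using jet_continuous[OF g] .
  show zero: "\<And>u. u \<le> 0 \<Longrightarrow> integral {-1..u} (D 0) = 0"
  proof -
    fix u :: real assume u: "u \<le> 0"
    have "integral {-1..u} (D 0) = integral {-1..u} (\<lambda>x. 0)"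
      by (rule integral_cong) (use u z in auto)
    then show "integral {-1..u} (D 0) = 0" by simp
  qed
  have main: "((\<lambda>x. integral {-1..x} (D 0)) has_real_derivative D 0 x) (at x)" for x
  proof (cases "x > -1")
    case True
    have "x \<in> interior {-1..x+1}" using True by simp
    then have "at x within {-1..x+1} = at x" by (rule at_within_interior)
    moreover have "((\<lambda>x. integral {-1..x} (D 0)) has_real_derivative D 0 x) (at x within {-1..x+1})"
      by (rule integral_has_real_derivative) (use True cont continuous_on_subset in auto)
    ultimately show ?thesis by simp
  next
    case False
    have "((\<lambda>x. 0) has_real_derivative 0) (at x)" by simp
    then have "((\<lambda>x. integral {-1..x} (D 0)) has_real_derivative 0) (at x)"
      by (rule has_field_derivative_transform_within_open[of _ _ _ "{..<0}"]) (use False zero in auto)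
    then show ?thesis using False z by simp
  qed
  show "jet (\<lambda>k x. if k = 0 then integral {-1..x} (D 0) else D (k - 1) x) UNIV"
    unfolding jet_def
  proof (intro allI ballI)
    fix k x
    show "((\<lambda>x. if k = 0 then integral {-1..x} (D 0) else D (k - 1) x) has_real_derivative
          (if Suc k = 0 then integral {-1..x} (D 0) else D (Suc k - 1) x)) (at x within UNIV)"
      using main[of x] jetD[OF g, of x "k-1"] by (cases k) auto
  qed
qed


fun Pk :: "nat \<Rightarrow> real poly" where
  "Pk 0 = 1"
| "Pk (Suc k) = [:0,0,1:] * (Pk k - pderiv (Pk k))"

definition psiD :: "nat \<Rightarrow> real \<Rightarrow> real" where
  "psiD k x = (if x \<le> 0 then 0 else poly (Pk k) (1/x) * exp (-1/x))"

lemma poly_exp_lim: "((\<lambda>u. poly Q u * exp (-u)) \<longlongrightarrow> 0) (at_top :: real filter)"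
proof -
  have eq: "(\<lambda>u. poly Q u * exp (-u)) = (\<lambda>u. \<Sum>i\<le>degree Q. coeff Q i * (u ^ i / exp u))"
    by (auto simp: poly_altdef sum_divide_distrib exp_minus field_simps)
  have "((\<lambda>u. \<Sum>i\<le>degree Q. coeff Q i * (u ^ i / exp u)) \<longlongrightarrow> (\<Sum>i\<le>degree Q. coeff Q i * 0)) at_top"
    by (intro tendsto_sum tendsto_mult tendsto_const tendsto_power_div_exp_0)
  then show ?thesis unfolding eq by simp
qed

lemma poly_exp_lim0: "((\<lambda>x. poly Q (1/x) * exp (-1/x)) \<longlongrightarrow> 0) (at_right (0::real))"
proof -
  have "((\<lambda>x. poly Q (inverse x) * exp (- inverse x)) \<longlongrightarrow> 0) (at_right (0::real))"
    using filterlim_compose[OF poly_exp_lim filterlim_inverse_at_top_right] by (simp add: o_def)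
  then show ?thesis by (simp add: divide_inverse)
qed

lemma psiD_pos_deriv:
  assumes "x > 0"
  shows "((\<lambda>x. poly (Pk k) (1/x) * exp (-1/x)) has_real_derivative
          poly (Pk (Suc k)) (1/x) * exp (-1/x)) (at x)"
proof -
  have "((\<lambda>x. poly (Pk k) (1/x) * exp (-1/x)) has_real_derivative
      poly (pderiv (Pk k)) (1/x) * (- 1 / x^2) * exp (-1/x) + poly (Pk k) (1/x) * (exp (-1/x) * (1/x^2))) (at x)"
    using assms
    by (auto intro!: derivative_eq_intros DERIV_chain2[OF poly_DERIV] simp: power2_eq_square field_simps)
  moreover have "poly (pderiv (Pk k)) (1/x) * (- 1 / x^2) * exp (-1/x) + poly (Pk k) (1/x) * (exp (-1/x) * (1/x^2))
      = poly (Pk (Suc k)) (1/x) * exp (-1/x)"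
    by (simp add: algebra_simps power2_eq_square)
  ultimately show ?thesis by simp
qed

lemma psiD_jet: "jet psiD UNIV"
  unfolding jet_def
proof (intro allI ballI)
  fix k and x :: real
  show "(psiD k has_real_derivative psiD (Suc k) x) (at x within UNIV)"
  proof (cases "x > 0")
    case True
    have "((\<lambda>x. poly (Pk k) (1/x) * exp (-1/x)) has_real_derivative psiD (Suc k) x) (at x)"
      using psiD_pos_deriv[OF True] True by (simp add: psiD_def)
    then show ?thesis
      by (rule has_field_derivative_transform_within_open[of _ _ _ "{0<..}"]) (use True in \<open>auto simp: psiD_def\<close>)
  next
    case False
    show ?thesis
    proof (cases "x < 0")
      case True
      have "((\<lambda>x. 0) has_real_derivative 0) (at x)" by simp
      then have "(psiD k has_real_derivative 0) (at x)"
        by (rule has_field_derivative_transform_within_open[of _ _ _ "{..<0}"]) (use True in \<open>auto simp: psiD_def\<close>)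
      then show ?thesis using True by (simp add: psiD_def)
    next
      case False
      then have x0: "x = 0" using \<open>\<not> x > 0\<close> by simp
      have r: "((\<lambda>y. psiD k y / y) \<longlongrightarrow> 0) (at_right 0)"
      proof (rule Lim_transform_eventually[OF poly_exp_lim0[of "pCons 0 (Pk k)"]])
        show "\<forall>\<^sub>F y in at_right 0. poly (pCons 0 (Pk k)) (1 / y) * exp (- 1 / y) = psiD k y / y"
          by (auto simp: eventually_at_right_less psiD_def eventually_at_filter)
      qed
      have l: "((\<lambda>y. psiD k y / y) \<longlongrightarrow> 0) (at_left 0)"
      proof (rule Lim_transform_eventually[OF tendsto_const[of 0]])
        show "\<forall>\<^sub>F y in at_left (0::real). 0 = psiD k y / y"
          unfolding eventually_at_filter by (auto simp: psiD_def)
      qed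
      have "((\<lambda>y. (psiD k y - psiD k 0) / (y - 0)) \<longlongrightarrow> psiD (Suc k) 0) (at 0)"
        using filterlim_at_split[of "\<lambda>y. psiD k y / y" "nhds 0" 0] r l by (simp add: psiD_def)
      then show ?thesis unfolding has_field_derivative_iff x0 by simp
    qed
  qed
qed

lemma psiD_nonpos: "x \<le> 0 \<Longrightarrow> psiD k x = 0"
  by (simp add: psiD_def)

lemma psiD_pos: "x > 0 \<Longrightarrow> psiD 0 x > 0"
  by (simp add: psiD_def)


definition phiD :: "nat \<Rightarrow> real \<Rightarrow> real" where
  "phiD k x = (\<Sum>i = 0..k. of_nat (k choose i) * psiD i x * ((-1)^(k-i) * psiD (k-i) ((-1) * x + 1)))"

lemma phiD_jet: "jet phiD UNIV"
  unfolding phiD_def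
  by (rule jet_mult[OF psiD_jet jet_affine[OF psiD_jet]])

lemma phiD_out: "x \<le> 0 \<or> x \<ge> 1 \<Longrightarrow> phiD k x = 0"
  unfolding phiD_def by (rule sum.neutral) (auto simp: psiD_nonpos)

lemma phiD0: "phiD 0 x = psiD 0 x * psiD 0 (1 - x)"
  by (simp add: phiD_def)

lemma phiD0_nonneg: "phiD 0 x \<ge> 0"
  unfolding phiD0 psiD_def by auto

lemma phiD0_pos: "0 < x \<Longrightarrow> x < 1 \<Longrightarrow> phiD 0 x > 0"
  unfolding phiD0 by (simp add: psiD_pos)

definition PhiD :: "nat \<Rightarrow> real \<Rightarrow> real" where
  "PhiD k x = (if k = 0 then integral {-1..x} (phiD 0) else phiD (k - 1) x)"

lemma PhiD_jet: "jet PhiD UNIV"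
  unfolding PhiD_def by (rule jet_antideriv(1)[OF phiD_jet]) (simp add: phiD_out)

lemma PhiD_nonpos: "x \<le> 0 \<Longrightarrow> PhiD k x = 0"
  unfolding PhiD_def using jet_antideriv(2)[OF phiD_jet, of x] by (auto simp: phiD_out)

lemma PhiD_I_pos: "PhiD 0 1 > 0"
proof -
  have d: "\<And>x. (PhiD 0 has_real_derivative phiD 0 x) (at x)"
    using jetD[OF PhiD_jet, of _ 0] by (simp add: PhiD_def)
  have c: "continuous_on {0..1} (PhiD 0)"
    using jet_continuous[OF PhiD_jet, of 0] continuous_on_subset by blast
  have dd: "\<And>x. 0 < x \<Longrightarrow> x < 1 \<Longrightarrow> PhiD 0 differentiable (at x)"
    using d real_differentiable_def by blast
  obtain l z where z: "0 < z" "z < 1" "(PhiD 0 has_real_derivative l) (at z)" "PhiD 0 1 - PhiD 0 0 = (1 - 0) * l"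
    using MVT[OF zero_less_one c dd] by blast
  have "l = phiD 0 z" using DERIV_unique[OF z(3) d] .
  then show ?thesis using z phiD0_pos[of z] PhiD_nonpos[of 0 0] by simp
qed

definition I0 :: real where "I0 = PhiD 0 1"

definition SD :: "nat \<Rightarrow> real \<Rightarrow> real" where
  "SD k x = (1 / I0) * PhiD k x"

lemma SD_jet: "jet SD UNIV"
  unfolding SD_def by (rule jet_cmult[OF PhiD_jet])

lemma SD_nonpos: "x \<le> 0 \<Longrightarrow> SD k x = 0"
  by (simp add: SD_def PhiD_nonpos)

lemma deriv_within_of_at: "jet D UNIV \<Longrightarrow> (D k has_real_derivative D (Suc k) x) (at x within S)"
  using jetD[of D UNIV x k] DERIV_subset by blast

lemma SD_ge1: "x \<ge> 1 \<Longrightarrow> SD 0 x = 1"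
proof -
  assume x: "x \<ge> 1"
  have "\<bar>PhiD 0 x - PhiD 0 1\<bar> \<le> 0 * (x - 1)"
    by (rule deriv_abs[OF x deriv_within_of_at[OF PhiD_jet]]) (simp add: PhiD_def phiD_out)
  then show ?thesis using PhiD_I_pos by (simp add: SD_def I0_def)
qed

lemma SD_hi: "x \<ge> 1 \<Longrightarrow> k \<ge> 1 \<Longrightarrow> SD k x = 0"
  by (simp add: SD_def PhiD_def phiD_out)

lemma SD_lo: "x \<le> 0 \<Longrightarrow> SD k x = 0"
  by (rule SD_nonpos)

lemma SD_mono: "x \<le> y \<Longrightarrow> SD 0 x \<le> SD 0 y"
proof -
  assume xy: "x \<le> y"
  have "0 * (y - x) \<le> SD 0 y - SD 0 x"
    by (rule deriv_lower[OF xy deriv_within_of_at[OF SD_jet]])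
       (use PhiD_I_pos in \<open>simp add: SD_def PhiD_def phiD0_nonneg I0_def\<close>)
  then show ?thesis by simp
qed

lemma SD_01: "0 \<le> SD 0 x \<and> SD 0 x \<le> 1"
  using SD_mono[of 0 x] SD_mono[of x 1] SD_nonpos[of 0] SD_ge1[of 1] SD_nonpos[of x] SD_ge1[of x]
  by (cases "x \<le> 0"; cases "x \<ge> 1") auto


lemma SD_bounds: "\<exists>B. \<forall>x. \<bar>SD 1 x\<bar> \<le> B \<and> \<bar>SD 2 x\<bar> \<le> B"
proof -
  obtain B1 where B1: "\<forall>x\<in>{0..1}. \<bar>SD 1 x\<bar> \<le> B1"
    using jet_bounded[OF jet_subset[OF SD_jet], of 0 1 1] by auto
  obtain B2 where B2: "\<forall>x\<in>{0..1}. \<bar>SD 2 x\<bar> \<le> B2"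
    using jet_bounded[OF jet_subset[OF SD_jet], of 0 1 2] by auto
  have "\<forall>x. \<bar>SD 1 x\<bar> \<le> max B1 B2 \<and> \<bar>SD 2 x\<bar> \<le> max B1 B2"
  proof
    fix x :: real
    show "\<bar>SD 1 x\<bar> \<le> max B1 B2 \<and> \<bar>SD 2 x\<bar> \<le> max B1 B2"
    proof (cases "x \<in> {0..1}")
      case True then show ?thesis using B1 B2 by fastforce
    next
      case False
      then have "x \<le> 0 \<or> x \<ge> 1" by auto
      then have "SD 1 x = 0" "SD 2 x = 0" using SD_lo SD_hi by auto
      moreover have "0 \<le> B1" using B1 by (meson abs_ge_zero atLeastAtMost_iff order_trans zero_le_one order_refl)
      ultimately show ?thesis by simp
    qed
  qed
  then show ?thesis by blast
qed

definition SigD :: "nat \<Rightarrow> real \<Rightarrow> real" where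
  "SigD k x = (if k = 0 then integral {-1..x} (SD 0) else SD (k - 1) x)"

lemma SigD_jet: "jet SigD UNIV"
  unfolding SigD_def by (rule jet_antideriv(1)[OF SD_jet]) (simp add: SD_nonpos)

lemma SigD_nonpos: "x \<le> 0 \<Longrightarrow> SigD k x = 0"
  unfolding SigD_def using jet_antideriv(2)[OF SD_jet, of x] by (auto simp: SD_nonpos)

definition Sig2D :: "nat \<Rightarrow> real \<Rightarrow> real" where
  "Sig2D k x = (if k = 0 then integral {-1..x} (SigD 0) else SigD (k - 1) x)"

lemma Sig2D_jet: "jet Sig2D UNIV"
  unfolding Sig2D_def by (rule jet_antideriv(1)[OF SigD_jet]) (simp add: SigD_nonpos)

lemma Sig2D_nonpos: "x \<le> 0 \<Longrightarrow> Sig2D k x = 0"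
  unfolding Sig2D_def using jet_antideriv(2)[OF SigD_jet, of x] by (auto simp: SigD_nonpos)

lemma SigD_1: "SigD 1 x = SD 0 x" by (simp add: SigD_def)
lemma Sig2D_1: "Sig2D 1 x = SigD 0 x" by (simp add: Sig2D_def)
lemma Sig2D_2: "Sig2D 2 x = SD 0 x" by (simp add: Sig2D_def SigD_def)
lemma Sig2D_3: "Sig2D 3 x = SD 1 x" by (simp add: Sig2D_def SigD_def numeral_3_eq_3)
lemma Sig2D_4: "Sig2D 4 x = SD 2 x" by (simp add: Sig2D_def SigD_def numeral_Bit0)

lemma Sig_bounds: "0 \<le> u \<Longrightarrow> 0 \<le> SigD 0 u \<and> SigD 0 u \<le> u"
proof -
  assume u: "0 \<le> u"
  have d: "\<And>x. (SigD 0 has_real_derivative SD 0 x) (at x within {0..u})"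
    using deriv_within_of_at[OF SigD_jet, of 0] by (simp add: SigD_def)
  have "0 * (u - 0) \<le> SigD 0 u - SigD 0 0" by (rule deriv_lower[OF u d]) (use SD_01 in auto)
  moreover have "SigD 0 u - SigD 0 0 \<le> 1 * (u - 0)" by (rule deriv_upper[OF u d]) (use SD_01 in auto)
  ultimately show ?thesis using SigD_nonpos[of 0 0] by simp
qed

lemma Sig_ge1: "1 \<le> u \<Longrightarrow> SigD 0 u = SigD 0 1 + (u - 1)"
proof -
  assume u: "1 \<le> u"
  have d: "\<And>x. x \<in> {1..u} \<Longrightarrow> ((\<lambda>x. SigD 0 x - x) has_real_derivative SD 0 x - 1) (at x within {1..u})"
    using deriv_within_of_at[OF SigD_jet, of 0] unfolding SigD_1 One_nat_def[symmetric]
    by (intro DERIV_diff) auto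
  have "\<bar>(SigD 0 u - u) - (SigD 0 1 - 1)\<bar> \<le> 0 * (u - 1)"
    by (rule deriv_abs[OF u d]) (auto simp: SD_ge1)
  then show ?thesis by simp
qed

lemma Sig_mono_diff: "u \<le> v \<Longrightarrow> u - SigD 0 u \<le> v - SigD 0 v"
proof -
  assume uv: "u \<le> v"
  have d: "\<And>x. x \<in> {u..v} \<Longrightarrow> ((\<lambda>x. x - SigD 0 x) has_real_derivative 1 - SD 0 x) (at x within {u..v})"
    using deriv_within_of_at[OF SigD_jet, of 0] unfolding SigD_1 One_nat_def[symmetric]
    by (intro DERIV_diff) auto
  have "0 * (v - u) \<le> (v - SigD 0 v) - (u - SigD 0 u)"
    by (rule deriv_lower[OF uv d]) (use SD_01 in auto)
  then show ?thesis by simp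
qed

lemma Sig2_bounds: "0 \<le> u \<Longrightarrow> 0 \<le> Sig2D 0 u \<and> Sig2D 0 u \<le> u * u"
proof -
  assume u: "0 \<le> u"
  have d: "\<And>x. (Sig2D 0 has_real_derivative SigD 0 x) (at x within {0..u})"
    using deriv_within_of_at[OF Sig2D_jet, of 0] by (simp add: Sig2D_def)
  have "0 * (u - 0) \<le> Sig2D 0 u - Sig2D 0 0" by (rule deriv_lower[OF u d]) (use Sig_bounds in auto)
  moreover have "Sig2D 0 u - Sig2D 0 0 \<le> u * (u - 0)" by (rule deriv_upper[OF u d]) (use Sig_bounds in force)
  ultimately show ?thesis using Sig2D_nonpos[of 0 0] by simp
qed

definition J0 :: real where "J0 = 1 - SigD 0 1"
definition kap :: real where "kap = Sig2D 0 1 - (SigD 0 1)^2 / 2"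

lemma J0_01: "0 \<le> J0 \<and> J0 \<le> 1"
  using Sig_bounds[of 1] by (simp add: J0_def)

lemma Sig_ge1': "1 \<le> u \<Longrightarrow> SigD 0 u = u - J0"
  using Sig_ge1[of u] by (simp add: J0_def)

lemma Sig2_ge1: "1 \<le> u \<Longrightarrow> Sig2D 0 u = (u - J0)^2 / 2 + kap"
proof -
  assume u: "1 \<le> u"
  have d: "\<And>x. x \<in> {1..u} \<Longrightarrow> ((\<lambda>x. Sig2D 0 x - (x - J0)^2/2) has_real_derivative SigD 0 x - (x - J0)) (at x within {1..u})"
  proof -
    fix x
    have e: "((\<lambda>x. (x - J0)^2/2) has_real_derivative (x - J0)) (at x within {1..u})"
      by (auto intro!: derivative_eq_intros)
    show "((\<lambda>x. Sig2D 0 x - (x - J0)^2/2) has_real_derivative SigD 0 x - (x - J0)) (at x within {1..u})"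
      using DERIV_diff[OF deriv_within_of_at[OF Sig2D_jet, of 0] e] unfolding Sig2D_1 One_nat_def[symmetric] .
  qed
  have "\<bar>(Sig2D 0 u - (u - J0)^2/2) - (Sig2D 0 1 - (1 - J0)^2/2)\<bar> \<le> 0 * (u - 1)"
    by (rule deriv_abs[OF u d]) (auto simp: Sig_ge1')
  then show ?thesis by (simp add: kap_def J0_def)
qed

lemma Sig_shift_upper: "u - J0 - SigD 0 u \<le> 0"
  using Sig_mono_diff[of u 1] Sig_ge1'[of u] by (cases "u \<le> 1") (auto simp: J0_def)

lemma Sig_shift_lower: "min u 0 - 1 \<le> u - J0 - SigD 0 u"
  using Sig_bounds[of u] SigD_nonpos[of u 0] J0_01 by (cases "u \<le> 0") auto


lemma jet_quad2: "jet (\<lambda>k x. if k = 0 then A + B * (x - p) + C * (x - p)^2 else if k = 1 then B + 2 * C * (x - p)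
      else if k = 2 then 2 * C else 0) S"
  unfolding jet_def
proof (intro allI ballI)
  fix k x
  show "((\<lambda>x. if k = 0 then A + B * (x - p) + C * (x - p)^2 else if k = 1 then B + 2 * C * (x - p)
      else if k = 2 then 2 * C else 0) has_real_derivative
     (if Suc k = 0 then A + B * (x - p) + C * (x - p)^2 else if Suc k = 1 then B + 2 * C * (x - p)
      else if Suc k = 2 then 2 * C else 0)) (at x within S)"
    by (cases "k = 0"; cases "k = 1"; cases "k = 2"; simp; (rule derivative_eq_intros refl | simp)+)
qed

lemma sum_delta0:
  assumes "\<And>i. i > 0 \<Longrightarrow> f i = (0::real)"
  shows "(\<Sum>i = 0..k. of_nat (k choose i) * f i * g (k - i)) = f 0 * g k"
proof -
  have "(\<Sum>i = 0..k. of_nat (k choose i) * f i * g (k - i)) =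
        of_nat (k choose 0) * f 0 * g (k - 0) + (\<Sum>i = Suc 0..k. of_nat (k choose i) * f i * g (k - i))"
    by (rule sum.atLeast_Suc_atMost) simp
  also have "(\<Sum>i = Suc 0..k. of_nat (k choose i) * f i * g (k - i)) = 0"
    by (rule sum.neutral) (auto simp: assms)
  finally show ?thesis by simp
qed

lemma sum_012:
  "(\<Sum>i = 0..0. of_nat (0 choose i) * f i * g (0 - i)) = f 0 * (g 0::real)"
  "(\<Sum>i = 0..1. of_nat (1 choose i) * f i * g (1 - i)) = f 0 * g 1 + f 1 * (g 0::real)"
  "(\<Sum>i = 0..2. of_nat (2 choose i) * f i * g (2 - i)) = f 0 * g 2 + 2 * f 1 * g 1 + f 2 * (g 0::real)"
  by (simp_all add: numeral_2_eq_2)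

lemma psc_iff:
  assumes "y > 0" "n \<ge> 1"
  shows "warped_scal n y y' y'' > 0 \<longleftrightarrow> 2 * y * y'' < (real n - 1) * (1 - y'^2)"
proof -
  have "warped_scal n y y' y'' = (real n / y^2) * ((real n - 1) * (1 - y'^2) - 2 * y * y'')"
    using assms by (simp add: warped_scal_def field_simps power2_eq_square)
  moreover have "real n / y^2 > 0" using assms by simp
  ultimately show ?thesis
    by (metis diff_gt_0_iff_gt mult_pos_pos zero_less_mult_pos)
qed


locale glue =
  fixes n :: nat and a1 b1 a2 b2 :: real and F1 F2 :: "nat \<Rightarrow> real \<Rightarrow> real"
    and \<eta> \<delta> E3 BS :: real
  assumes n: "n \<ge> 3"
    and int1: "a1 < b1" and int2: "a2 < b2"
    and smooth1: "jet F1 {a1..b1}"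
    and smooth2: "jet F2 {a2..b2}"
    and I1: "\<forall>t\<in>{a1..b1}. F1 0 t > 0 \<and> F1 1 t > 0 \<and> F1 2 t > 0"
    and I2: "\<forall>t\<in>{a2..b2}. F2 0 t > 0 \<and> F2 1 t > 0 \<and> F2 2 t > 0"
    and II1: "warped_psc n F1 a1 b1"
    and II2: "warped_psc n F2 a2 b2"
    and III: "F1 0 b1 < F2 0 a2" "F1 1 b1 = F2 1 a2"
    and pos: "a2 - b1 = (F2 0 a2 - F1 0 b1) / F1 1 b1"
    and E3: "\<forall>t\<in>{a1..b1}. \<bar>F1 3 t\<bar> \<le> E3" "\<forall>t\<in>{a2..b2}. \<bar>F2 3 t\<bar> \<le> E3"
    and BS: "\<forall>x. \<bar>SD 1 x\<bar> \<le> BS \<and> \<bar>SD 2 x\<bar> \<le> BS"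
    and eta: "0 < \<eta>" "\<eta> < F1 1 b1" "\<eta> < F1 0 b1"
    and cond1: "2 * (F1 0 b1 + \<eta>) * (F1 2 b1 + \<eta>) < (real n - 1) * (1 - (F1 1 b1 + \<eta>)^2)"
    and cond2: "2 * (F2 0 a2 + \<eta>) * (F2 2 a2 + \<eta>) < (real n - 1) * (1 - (F1 1 b1 + \<eta>)^2)"
    and dpos: "0 < \<delta>" "\<delta> \<le> 1/2" "2 * \<delta> \<le> b1 - a1" "2 * \<delta> \<le> b2 - a2" "2 * \<delta> \<le> a2 - b1"
    and C1: "(2 + 8*BS)*E3*\<delta> \<le> \<eta>"
    and C2: "F1 2 b1*\<delta> + (1 + 2*BS)*E3*\<delta>^2 \<le> \<eta>"
    and C3: "F1 1 b1*\<delta> + F1 2 b1*\<delta>^2 + E3*\<delta>^3 \<le> \<eta>"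
    and C4: "F1 1 b1*\<delta> + F1 2 b1*\<delta>^2 + F1 2 b1*\<bar>kap\<bar>*\<delta>^4 \<le> \<eta>"
    and C7: "F1 1 b1*\<delta> + F1 2 b1*\<bar>kap\<bar>*\<delta>^4 + F2 2 a2*\<delta>^2 \<le> \<eta>"
    and C8: "F2 2 a2*\<delta> + E3*\<delta>^2 + 2*BS*(E3*\<delta>^2 + (F1 2 b1 + F2 2 a2)*\<bar>kap\<bar>*\<delta>^3) \<le> \<eta>"
    and C9: "(1 + 8*BS)*E3*\<delta> + 4*BS*(F1 2 b1 + F2 2 a2)*\<bar>kap\<bar>*\<delta>^2 \<le> \<eta>"
    and C10: "F1 1 b1*\<delta> + F2 2 a2*\<delta>^2 + 2*(F1 2 b1 + F2 2 a2)*\<bar>kap\<bar>*\<delta>^4 + E3*\<delta>^3 \<le> \<eta>"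
begin

definition "s = F1 1 b1"
definition "c1 = F1 2 b1"
definition "c2 = F2 2 a2"
definition "y1 = F1 0 b1"
definition "y2 = F2 0 a2"
definition "w = \<delta>^2"
definition "al = 2 / \<delta>"
definition "bA = 2 - 2 * b1 / \<delta>"
definition "bB = - 2 * a2 / \<delta> - 1"
definition "mA = J0 - b1 / w"
definition "mB = J0 - a2 / w"

definition "sigA k t = al^k * SD k (al * t + bA)"
definition "sigB k t = al^k * SD k (al * t + bB)"

definition "quad k t = (if k = 0 then y1 + s * (t - b1) + (c1/2) * (t - b1)^2 else if k = 1 then s + 2 * (c1/2) * (t - b1)
      else if k = 2 then 2 * (c1/2) else 0)"

definition "Mj k t = quad k t + (- c1 * w^2) * ((1/w)^k * Sig2D k ((1/w) * t + mA))
                      + (c2 * w^2) * ((1/w)^k * Sig2D k ((1/w) * t + mB))"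

definition "P1 k t = F1 k t + (\<Sum>i = 0..k. of_nat (k choose i) * sigA i t * (Mj (k - i) t + (-1) * F1 (k - i) t))"
definition "P3 k t = Mj k t + (\<Sum>i = 0..k. of_nat (k choose i) * sigB i t * (F2 (k - i) t + (-1) * Mj (k - i) t))"

definition "G23 k t = (if t \<le> a2 + \<delta>/2 then Mj k t else P3 k t)"
definition "Fg k t = (if t \<le> b1 - \<delta>/2 then P1 k t else G23 k t)"

lemma sigA_jet: "jet sigA S"
  unfolding sigA_def[abs_def] by (rule jet_affine[OF SD_jet])
lemma sigB_jet: "jet sigB S"
  unfolding sigB_def[abs_def] by (rule jet_affine[OF SD_jet])

lemma Mj_jet: "jet Mj S"
  unfolding Mj_def[abs_def] quad_def[abs_def]
  by (intro jet_add jet_quad2 jet_cmult jet_affine Sig2D_jet)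

lemma P1_jet: "jet P1 {a1..b1 - \<delta>/2}"
proof -
  have sub: "{a1..b1 - \<delta>/2} \<subseteq> {a1..b1}" using dpos by auto
  have F1j: "jet F1 {a1..b1 - \<delta>/2}" by (rule jet_subset[OF smooth1 sub])
  show ?thesis
    unfolding P1_def[abs_def]
    by (intro jet_add F1j jet_mult sigA_jet Mj_jet jet_cmult)
qed

lemma P3_jet: "jet P3 {a2 + \<delta>/2..b2}"
proof -
  have sub: "{a2 + \<delta>/2..b2} \<subseteq> {a2..b2}" using dpos by auto
  have F2j: "jet F2 {a2 + \<delta>/2..b2}" by (rule jet_subset[OF smooth2 sub])
  show ?thesis
    unfolding P3_def[abs_def]
    by (intro jet_add F2j jet_mult sigB_jet Mj_jet jet_cmult)
qed

lemma al_pos: "al > 0" using dpos by (simp add: al_def)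

lemma sigA_zero: "t \<le> b1 - \<delta> \<Longrightarrow> sigA k t = 0"
proof -
  assume t: "t \<le> b1 - \<delta>"
  have "al * t + bA \<le> 0"
  proof -
    have "al * t \<le> al * (b1 - \<delta>)" using t al_pos by (simp add: mult_left_mono)
    also have "al * (b1 - \<delta>) + bA = 0" using dpos by (simp add: al_def bA_def field_simps)
    finally show ?thesis by linarith
  qed
  then show ?thesis by (simp add: sigA_def SD_lo)
qed

lemma sigA_one: "t \<ge> b1 - \<delta>/2 \<Longrightarrow> sigA k t = (if k = 0 then 1 else 0)"
proof -
  assume t: "t \<ge> b1 - \<delta>/2"
  have "al * t + bA \<ge> 1"
  proof -
    have "al * t \<ge> al * (b1 - \<delta>/2)" using t al_pos by (simp add: mult_left_mono)
    moreover have "al * (b1 - \<delta>/2) + bA = 1" using dpos by (simp add: al_def bA_def field_simps)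
    ultimately show ?thesis by linarith
  qed
  then show ?thesis by (auto simp: sigA_def SD_ge1 SD_hi)
qed

lemma sigB_zero: "t \<le> a2 + \<delta>/2 \<Longrightarrow> sigB k t = 0"
proof -
  assume t: "t \<le> a2 + \<delta>/2"
  have "al * t + bB \<le> 0"
  proof -
    have "al * t \<le> al * (a2 + \<delta>/2)" using t al_pos by (simp add: mult_left_mono)
    also have "al * (a2 + \<delta>/2) + bB = 0" using dpos by (simp add: al_def bB_def field_simps)
    finally show ?thesis by linarith
  qed
  then show ?thesis by (simp add: sigB_def SD_lo)
qed

lemma sigB_one: "t \<ge> a2 + \<delta> \<Longrightarrow> sigB k t = (if k = 0 then 1 else 0)"
proof -
  assume t: "t \<ge> a2 + \<delta>"
  have "al * t + bB \<ge> 1"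
  proof -
    have "al * t \<ge> al * (a2 + \<delta>)" using t al_pos by (simp add: mult_left_mono)
    moreover have "al * (a2 + \<delta>) + bB = 1" using dpos by (simp add: al_def bB_def field_simps)
    ultimately show ?thesis by linarith
  qed
  then show ?thesis by (auto simp: sigB_def SD_ge1 SD_hi)
qed

lemma P1_at_left: "t \<le> b1 - \<delta> \<Longrightarrow> P1 k t = F1 k t"
  unfolding P1_def by (subst sum.neutral) (auto simp: sigA_zero)

lemma P1_at_right: "t \<ge> b1 - \<delta>/2 \<Longrightarrow> P1 k t = Mj k t"
  unfolding P1_def by (subst sum_delta0) (auto simp: sigA_one)

lemma P3_at_left: "t \<le> a2 + \<delta>/2 \<Longrightarrow> P3 k t = Mj k t"
  unfolding P3_def by (subst sum.neutral) (auto simp: sigB_zero)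

lemma P3_at_right: "t \<ge> a2 + \<delta> \<Longrightarrow> P3 k t = F2 k t"
  unfolding P3_def by (subst sum_delta0) (auto simp: sigB_one)

lemma Fg_jet: "jet Fg {a1..b2}"
proof -
  have G: "jet G23 {b1 - \<delta>/2..b2}"
    unfolding G23_def[abs_def]
    by (rule jet_glue[OF _ _ jet_subset[OF Mj_jet] P3_jet]) (use dpos in \<open>auto simp: P3_at_left\<close>)
  show ?thesis
    unfolding Fg_def[abs_def]
    by (rule jet_glue[OF _ _ P1_jet G]) (use dpos in \<open>auto simp: P1_at_right G23_def\<close>)
qed

lemma Fg_left: "t \<le> b1 - \<delta> \<Longrightarrow> Fg k t = F1 k t"
  using dpos by (simp add: Fg_def P1_at_left)

lemma Fg_right: "t \<ge> a2 + \<delta> \<Longrightarrow> Fg k t = F2 k t"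
  using dpos by (simp add: Fg_def G23_def P3_at_right)

lemma basics: "s > 0" "c1 > 0" "c2 > 0" "y1 > 0" "y2 > 0" "F2 1 a2 = s" "y1 + s * (a2 - b1) = y2"
  "E3 \<ge> 0" "BS \<ge> 0" "w > 0" "w \<le> \<delta>/2" "w = \<delta>^2"
proof -
  show s: "s > 0" using I1 int1 by (auto simp: s_def)
  show "c1 > 0" using I1 int1 by (auto simp: c1_def)
  show "c2 > 0" using I2 int2 by (auto simp: c2_def)
  show "y1 > 0" using I1 int1 by (auto simp: y1_def)
  show "y2 > 0" using I2 int2 by (auto simp: y2_def)
  show "F2 1 a2 = s" using III by (simp add: s_def)
  show "y1 + s * (a2 - b1) = y2" using pos s by (simp add: s_def y1_def y2_def field_simps)
  show "E3 \<ge> 0" using E3(1) int1 by (meson abs_ge_zero atLeastAtMost_iff order.trans less_imp_le order_refl)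
  show "BS \<ge> 0" using BS by (meson abs_ge_zero order.trans)
  show "w > 0" using dpos by (simp add: w_def)
  show "w \<le> \<delta>/2" using dpos by (simp add: w_def power2_eq_square mult_right_mono)
  show "w = \<delta>^2" by (simp add: w_def)
qed

lemma uA_eq: "(1/w) * t + mA = (t - b1) / w + J0"
  using basics(10) by (simp add: mA_def field_simps)
lemma uB_eq: "(1/w) * t + mB = (t - a2) / w + J0"
  using basics(10) by (simp add: mB_def field_simps)

lemma Mj_012:
  "Mj 0 t = y1 + s * (t - b1) + (c1/2) * (t - b1)^2 - c1 * w^2 * Sig2D 0 ((t - b1) / w + J0)
             + c2 * w^2 * Sig2D 0 ((t - a2) / w + J0)"
  "Mj 1 t = s + c1 * (t - b1) - c1 * w * SigD 0 ((t - b1) / w + J0) + c2 * w * SigD 0 ((t - a2) / w + J0)"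
  "Mj 2 t = c1 - c1 * SD 0 ((t - b1) / w + J0) + c2 * SD 0 ((t - a2) / w + J0)"
proof -
  have w: "w \<noteq> 0" using basics(10) by simp
  show "Mj 0 t = y1 + s * (t - b1) + (c1/2) * (t - b1)^2 - c1 * w^2 * Sig2D 0 ((t - b1) / w + J0)
             + c2 * w^2 * Sig2D 0 ((t - a2) / w + J0)"
    unfolding Mj_def quad_def uA_eq uB_eq by simp
  show "Mj 1 t = s + c1 * (t - b1) - c1 * w * SigD 0 ((t - b1) / w + J0) + c2 * w * SigD 0 ((t - a2) / w + J0)"
    unfolding Mj_def quad_def uA_eq uB_eq using w by (simp add: Sig2D_1[unfolded One_nat_def] power2_eq_square)
  show "Mj 2 t = c1 - c1 * SD 0 ((t - b1) / w + J0) + c2 * SD 0 ((t - a2) / w + J0)"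
    unfolding Mj_def quad_def uA_eq uB_eq using w by (simp add: Sig2D_2 power2_eq_square)
qed

lemma uA_nonpos: "t \<le> b1 - \<delta>/2 \<Longrightarrow> (t - b1) / w + J0 \<le> 0"
proof -
  assume t: "t \<le> b1 - \<delta>/2"
  have "(t - b1) / w \<le> (-\<delta>/2) / w" by (intro divide_right_mono) (use t basics(10) in auto)
  also have "(-\<delta>/2) / w = - 1 / (2*\<delta>)" using dpos by (simp add: w_def power2_eq_square field_simps)
  also have "- 1 / (2*\<delta>) \<le> -1" using dpos by (simp add: field_simps)
  finally show ?thesis using J0_01 by linarith
qed

lemma uA_ge1: "t \<ge> b1 + \<delta> \<Longrightarrow> (t - b1) / w + J0 \<ge> 1"
proof -
  assume t: "t \<ge> b1 + \<delta>"
  have "(t - b1) / w \<ge> \<delta> / w" by (intro divide_right_mono) (use t basics(10) in auto)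
  also have "\<delta> / w = 1 / \<delta>" using dpos by (simp add: w_def power2_eq_square field_simps)
  also have "1 / \<delta> \<ge> 1" using dpos by (simp add: field_simps)
  finally show ?thesis using J0_01 by linarith
qed

lemma uB_nonpos: "t \<le> a2 - \<delta> \<Longrightarrow> (t - a2) / w + J0 \<le> 0"
proof -
  assume t: "t \<le> a2 - \<delta>"
  have "(t - a2) / w \<le> (-\<delta>) / w" by (intro divide_right_mono) (use t basics(10) in auto)
  also have "(-\<delta>) / w = - 1 / \<delta>" using dpos by (simp add: w_def power2_eq_square field_simps)
  also have "- 1 / \<delta> \<le> -1" using dpos by (simp add: field_simps)
  finally show ?thesis using J0_01 by linarith
qed

lemma uB_ge1: "t \<ge> a2 + \<delta>/2 \<Longrightarrow> (t - a2) / w + J0 \<ge> 1"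
proof -
  assume t: "t \<ge> a2 + \<delta>/2"
  have "(t - a2) / w \<ge> (\<delta>/2) / w" by (intro divide_right_mono) (use t basics(10) in auto)
  also have "(\<delta>/2) / w = 1 / (2*\<delta>)" using dpos by (simp add: w_def power2_eq_square field_simps)
  also have "1 / (2*\<delta>) \<ge> 1" using dpos by (simp add: field_simps)
  finally show ?thesis using J0_01 by linarith
qed

lemma tay1_2: "t \<in> {b1 - \<delta>..b1} \<Longrightarrow> \<bar>c1 - F1 2 t\<bar> \<le> E3 * \<delta>"
proof -
  assume t: "t \<in> {b1 - \<delta>..b1}"
  have sub: "{t..b1} \<subseteq> {a1..b1}" using t dpos by auto
  have "\<bar>F1 2 b1 - F1 2 t\<bar> \<le> E3 * (b1 - t)"
    by (rule deriv_abs[of t b1 "F1 2" "F1 3"]) (use t sub E3 jet_sub_deriv[OF smooth1 sub] in \<open>auto simp: numeral_3_eq_3 numeral_2_eq_2\<close>)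
  also have "E3 * (b1 - t) \<le> E3 * \<delta>" using t basics(8) by (intro mult_left_mono) auto
  finally show ?thesis by (simp add: c1_def)
qed


lemma F1d: "{c..d} \<subseteq> {a1..b1} \<Longrightarrow> x \<in> {c..d} \<Longrightarrow> (F1 k has_real_derivative F1 (Suc k) x) (at x within {c..d})"
  by (rule jet_sub_deriv[OF smooth1])
lemma F2d: "{c..d} \<subseteq> {a2..b2} \<Longrightarrow> x \<in> {c..d} \<Longrightarrow> (F2 k has_real_derivative F2 (Suc k) x) (at x within {c..d})"
  by (rule jet_sub_deriv[OF smooth2])

lemma tay1_1: "t \<in> {b1 - \<delta>..b1} \<Longrightarrow> \<bar>s + c1 * (t - b1) - F1 1 t\<bar> \<le> E3 * \<delta>^2"
proof -
  assume t: "t \<in> {b1 - \<delta>..b1}"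
  have sub: "{t..b1} \<subseteq> {a1..b1}" using t dpos by auto
  have d: "((\<lambda>x. s + c1 * (x - b1) - F1 1 x) has_real_derivative c1 - F1 2 x) (at x within {t..b1})"
    if "x \<in> {t..b1}" for x
    using F1d[OF sub that, of 1] by (auto intro!: derivative_eq_intros simp: numeral_2_eq_2)
  have "\<bar>(s + c1 * (b1 - b1) - F1 1 b1) - (s + c1 * (t - b1) - F1 1 t)\<bar> \<le> (E3 * \<delta>) * (b1 - t)"
    by (rule deriv_abs[OF _ d]) (use t tay1_2 in auto)
  also have "(E3 * \<delta>) * (b1 - t) \<le> (E3 * \<delta>) * \<delta>" using t basics(8) dpos by (intro mult_left_mono) auto
  finally show ?thesis by (simp add: s_def power2_eq_square)
qed

lemma tay1_0: "t \<in> {b1 - \<delta>..b1} \<Longrightarrow> \<bar>y1 + s * (t - b1) + (c1/2) * (t - b1)^2 - F1 0 t\<bar> \<le> E3 * \<delta>^3"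
proof -
  assume t: "t \<in> {b1 - \<delta>..b1}"
  have sub: "{t..b1} \<subseteq> {a1..b1}" using t dpos by auto
  have d: "((\<lambda>x. y1 + s * (x - b1) + (c1/2) * (x - b1)^2 - F1 0 x) has_real_derivative s + c1 * (x - b1) - F1 1 x) (at x within {t..b1})"
    if "x \<in> {t..b1}" for x
    using F1d[OF sub that, of 0] by (auto intro!: derivative_eq_intros)
  have "\<bar>(y1 + s * (b1 - b1) + (c1/2) * (b1 - b1)^2 - F1 0 b1) - (y1 + s * (t - b1) + (c1/2) * (t - b1)^2 - F1 0 t)\<bar> \<le> (E3 * \<delta>^2) * (b1 - t)"
    by (rule deriv_abs[OF _ d]) (use t tay1_1 in auto)
  also have "(E3 * \<delta>^2) * (b1 - t) \<le> (E3 * \<delta>^2) * \<delta>" using t basics(8) dpos by (intro mult_left_mono) auto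
  finally show ?thesis by (simp add: y1_def power3_eq_cube power2_eq_square)
qed

lemma tay2_2: "t \<in> {a2..a2 + \<delta>} \<Longrightarrow> \<bar>F2 2 t - c2\<bar> \<le> E3 * \<delta>"
proof -
  assume t: "t \<in> {a2..a2 + \<delta>}"
  have sub: "{a2..t} \<subseteq> {a2..b2}" using t dpos by auto
  have "\<bar>F2 2 t - F2 2 a2\<bar> \<le> E3 * (t - a2)"
    by (rule deriv_abs[of a2 t "F2 2" "F2 3"]) (use t sub E3 F2d[OF sub] in \<open>auto simp: numeral_3_eq_3 numeral_2_eq_2\<close>)
  also have "E3 * (t - a2) \<le> E3 * \<delta>" using t basics(8) by (intro mult_left_mono) auto
  finally show ?thesis by (simp add: c2_def)
qed

lemma tay2_1: "t \<in> {a2..a2 + \<delta>} \<Longrightarrow> \<bar>F2 1 t - (s + c2 * (t - a2))\<bar> \<le> E3 * \<delta>^2"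
proof -
  assume t: "t \<in> {a2..a2 + \<delta>}"
  have sub: "{a2..t} \<subseteq> {a2..b2}" using t dpos by auto
  have d: "((\<lambda>x. F2 1 x - (s + c2 * (x - a2))) has_real_derivative F2 2 x - c2) (at x within {a2..t})"
    if "x \<in> {a2..t}" for x
    using F2d[OF sub that, of 1] by (auto intro!: derivative_eq_intros simp: numeral_2_eq_2)
  have "\<bar>(F2 1 t - (s + c2 * (t - a2))) - (F2 1 a2 - (s + c2 * (a2 - a2)))\<bar> \<le> (E3 * \<delta>) * (t - a2)"
    by (rule deriv_abs[OF _ d]) (use t tay2_2 in auto)
  also have "(E3 * \<delta>) * (t - a2) \<le> (E3 * \<delta>) * \<delta>" using t basics(8) dpos by (intro mult_left_mono) auto
  finally show ?thesis using basics(6) by (simp add: power2_eq_square)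
qed

lemma tay2_0: "t \<in> {a2..a2 + \<delta>} \<Longrightarrow> \<bar>F2 0 t - (y2 + s * (t - a2) + (c2/2) * (t - a2)^2)\<bar> \<le> E3 * \<delta>^3"
proof -
  assume t: "t \<in> {a2..a2 + \<delta>}"
  have sub: "{a2..t} \<subseteq> {a2..b2}" using t dpos by auto
  have d: "((\<lambda>x. F2 0 x - (y2 + s * (x - a2) + (c2/2) * (x - a2)^2)) has_real_derivative F2 1 x - (s + c2 * (x - a2))) (at x within {a2..t})"
    if "x \<in> {a2..t}" for x
    using F2d[OF sub that, of 0] by (auto intro!: derivative_eq_intros)
  have "\<bar>(F2 0 t - (y2 + s * (t - a2) + (c2/2) * (t - a2)^2)) - (F2 0 a2 - (y2 + s * (a2 - a2) + (c2/2) * (a2 - a2)^2))\<bar> \<le> (E3 * \<delta>^2) * (t - a2)"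
    by (rule deriv_abs[OF _ d]) (use t tay2_1 in auto)
  also have "(E3 * \<delta>^2) * (t - a2) \<le> (E3 * \<delta>^2) * \<delta>" using t basics(8) dpos by (intro mult_left_mono) auto
  finally show ?thesis by (simp add: y2_def power3_eq_cube power2_eq_square)
qed


lemma abs_mult_le: "\<bar>a\<bar> \<le> A \<Longrightarrow> \<bar>b\<bar> \<le> B \<Longrightarrow> \<bar>a * b\<bar> \<le> A * (B::real)"
  unfolding abs_mult by (rule mult_mono) auto

lemma sq_le: "\<bar>x\<bar> \<le> d \<Longrightarrow> x^2 \<le> (d::real)^2"
  by (metis abs_ge_zero order.trans power2_abs power_mono)

lemma good_gen:
  assumes "0 < y" "0 < y'" "y' \<le> S" "0 \<le> Y" "0 \<le> Cc" "2*Y*Cc < (real n - 1)*(1 - S^2)"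
    "y'' \<le> 0 \<or> (y \<le> Y \<and> y'' \<le> Cc)"
  shows "0 < warped_scal n y y' y''"
proof -
  have n1: "n \<ge> 1" using n by simp
  have "y'^2 \<le> S^2" using assms(2,3) by (intro power_mono) auto
  then have K: "(real n - 1)*(1 - S^2) \<le> (real n - 1)*(1 - y'^2)" using n by (intro mult_left_mono) auto
  have "2 * y * y'' < (real n - 1) * (1 - y'^2)"
  proof (cases "y'' \<le> 0")
    case True
    have "2 * y * y'' \<le> 0" using True assms(1) by (simp add: mult_nonneg_nonpos)
    moreover have "0 \<le> 2*Y*Cc" using assms(4,5) by simp
    ultimately show ?thesis using assms(6) K by linarith
  next
    case False
    then have h: "y \<le> Y" "y'' \<le> Cc" using assms(7) by auto
    have "y * y'' \<le> Y * Cc" using h False assms(1,4) by (intro mult_mono) auto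
    then show ?thesis using assms(6) K by linarith
  qed
  then show ?thesis using psc_iff[OF assms(1) n1] by simp
qed

definition "good t \<longleftrightarrow> 0 < Fg 0 t \<and> 0 < Fg 1 t \<and> 0 < warped_scal n (Fg 0 t) (Fg 1 t) (Fg 2 t)"

lemma near1:
  assumes "\<bar>Fg 0 t - y1\<bar> \<le> \<eta>" "\<bar>Fg 1 t - s\<bar> \<le> \<eta>" "Fg 2 t \<le> c1 + \<eta>"
  shows "good t"
proof -
  have y: "0 < Fg 0 t" using assms(1) eta by (simp add: y1_def abs_le_iff)
  have y': "0 < Fg 1 t" using assms(2) eta by (simp add: s_def abs_le_iff)
  show ?thesis unfolding good_def
    using y y' good_gen[of "Fg 0 t" "Fg 1 t" "s + \<eta>" "y1 + \<eta>" "c1 + \<eta>" "Fg 2 t"] assms cond1 eta basics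
    by (simp add: s_def y1_def c1_def abs_le_iff)
qed

lemma near2:
  assumes "\<bar>Fg 0 t - y2\<bar> \<le> \<eta>" "\<bar>Fg 1 t - s\<bar> \<le> \<eta>" "Fg 2 t \<le> c2 + \<eta>"
  shows "good t"
proof -
  have "y1 < y2" using III by (simp add: y1_def y2_def)
  then have y: "0 < Fg 0 t" using assms(1) eta by (simp add: y1_def abs_le_iff)
  have y': "0 < Fg 1 t" using assms(2) eta by (simp add: s_def abs_le_iff)
  show ?thesis unfolding good_def
    using y y' good_gen[of "Fg 0 t" "Fg 1 t" "s + \<eta>" "y2 + \<eta>" "c2 + \<eta>" "Fg 2 t"] assms cond2 eta basics
    by (simp add: s_def y2_def c2_def abs_le_iff)
qed

lemma sig_bounds:
  "0 \<le> sigA 0 t" "sigA 0 t \<le> 1" "\<bar>sigA 1 t\<bar> \<le> al * BS" "\<bar>sigA 2 t\<bar> \<le> al^2 * BS"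
  "0 \<le> sigB 0 t" "sigB 0 t \<le> 1" "\<bar>sigB 1 t\<bar> \<le> al * BS" "\<bar>sigB 2 t\<bar> \<le> al^2 * BS"
  using SD_01 BS al_pos by (auto simp: sigA_def sigB_def abs_mult intro: mult_left_mono)

lemma al_facts: "al * \<delta> = 2" "al^2 * \<delta>^2 = 4"
  using dpos by (simp_all add: al_def power2_eq_square)

lemma R2: assumes t: "t \<in> {b1 - \<delta>..b1 - \<delta>/2}" shows "good t"
proof -
  have t': "t \<in> {b1 - \<delta>..b1}" using t dpos by auto
  have tle: "t \<le> b1 - \<delta>/2" using t by simp
  have Fk: "Fg k t = P1 k t" for k using tle by (simp add: Fg_def)
  have uA: "(t - b1) / w + J0 \<le> 0" by (rule uA_nonpos[OF tle])
  have uB: "(t - a2) / w + J0 \<le> 0" by (rule uB_nonpos) (use t dpos in auto)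
  have M0: "Mj 0 t = y1 + s * (t - b1) + (c1/2) * (t - b1)^2"
   and M1: "Mj 1 t = s + c1 * (t - b1)" and M2: "Mj 2 t = c1"
    using uA uB by (subst Mj_012; simp add: Sig2D_nonpos SigD_nonpos SD_nonpos)+
  define g0 where "g0 = Mj 0 t + -1 * F1 0 t"
  define g1 where "g1 = Mj 1 t + -1 * F1 1 t"
  define g2 where "g2 = Mj 2 t + -1 * F1 2 t"
  have g0: "\<bar>g0\<bar> \<le> E3 * \<delta>^3" using tay1_0[OF t'] M0 by (simp add: g0_def)
  have g1: "\<bar>g1\<bar> \<le> E3 * \<delta>^2" using tay1_1[OF t'] M1 by (simp add: g1_def)
  have g2: "\<bar>g2\<bar> \<le> E3 * \<delta>" using tay1_2[OF t'] M2 by (simp add: g2_def)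
  have P0: "Fg 0 t = F1 0 t + sigA 0 t * g0" unfolding Fk P1_def g0_def using sum_012[of "\<lambda>i. sigA i t" "\<lambda>j. Mj j t + -1 * F1 j t"] by simp
  have P1': "Fg 1 t = F1 1 t + (sigA 0 t * g1 + sigA 1 t * g0)" unfolding Fk P1_def g0_def g1_def using sum_012[of "\<lambda>i. sigA i t" "\<lambda>j. Mj j t + -1 * F1 j t"] by simp
  have P2: "Fg 2 t = F1 2 t + (sigA 0 t * g2 + 2 * sigA 1 t * g1 + sigA 2 t * g0)" unfolding Fk P1_def g0_def g1_def g2_def using sum_012[of "\<lambda>i. sigA i t" "\<lambda>j. Mj j t + -1 * F1 j t"] by simp
  have s0: "\<bar>sigA 0 t\<bar> \<le> 1" using sig_bounds(1,2)[of t] by simp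
  have b10: "\<bar>sigA 1 t * g0\<bar> \<le> 2 * BS * E3 * \<delta>^2"
  proof -
    have "\<bar>sigA 1 t * g0\<bar> \<le> (al * BS) * (E3 * \<delta>^3)" by (rule abs_mult_le[OF sig_bounds(3) g0])
    also have "\<dots> = (al * \<delta>) * BS * E3 * \<delta>^2" by (simp add: power2_eq_square power3_eq_cube)
    finally show ?thesis using al_facts by simp
  qed
  have b20: "\<bar>sigA 2 t * g0\<bar> \<le> 4 * BS * E3 * \<delta>"
  proof -
    have "\<bar>sigA 2 t * g0\<bar> \<le> (al^2 * BS) * (E3 * \<delta>^3)" by (rule abs_mult_le[OF sig_bounds(4) g0])
    also have "\<dots> = (al^2 * \<delta>^2) * BS * E3 * \<delta>" by (simp add: power2_eq_square power3_eq_cube)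
    finally show ?thesis using al_facts by simp
  qed
  have b11: "\<bar>sigA 1 t * g1\<bar> \<le> 2 * BS * E3 * \<delta>"
  proof -
    have "\<bar>sigA 1 t * g1\<bar> \<le> (al * BS) * (E3 * \<delta>^2)" by (rule abs_mult_le[OF sig_bounds(3) g1])
    also have "\<dots> = (al * \<delta>) * BS * E3 * \<delta>" by (simp add: power2_eq_square)
    finally show ?thesis using al_facts by simp
  qed
  have b02: "\<bar>sigA 0 t * g2\<bar> \<le> E3 * \<delta>" using abs_mult_le[OF s0 g2] by simp
  have b01: "\<bar>sigA 0 t * g1\<bar> \<le> E3 * \<delta>^2" using abs_mult_le[OF s0 g1] by simp
  have b00: "\<bar>(1 - sigA 0 t) * g0\<bar> \<le> E3 * \<delta>^3"
    using abs_mult_le[OF _ g0, of "1 - sigA 0 t" 1] sig_bounds(1,2)[of t] by simp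
  have x: "-\<delta> \<le> t - b1" "t - b1 \<le> 0" using t by auto
  have sx: "- (s * \<delta>) \<le> s * (t - b1)" "s * (t - b1) \<le> 0"
  proof -
    have "s * (-\<delta>) \<le> s * (t - b1)" by (rule mult_left_mono) (use x basics(1) in auto)
    then show "- (s * \<delta>) \<le> s * (t - b1)" by simp
    show "s * (t - b1) \<le> 0" by (rule mult_nonneg_nonpos) (use x basics(1) in auto)
  qed
  have cx: "- (c1 * \<delta>) \<le> c1 * (t - b1)" "c1 * (t - b1) \<le> 0"
  proof -
    have "c1 * (-\<delta>) \<le> c1 * (t - b1)" by (rule mult_left_mono) (use x basics(2) in auto)
    then show "- (c1 * \<delta>) \<le> c1 * (t - b1)" by simp
    show "c1 * (t - b1) \<le> 0" by (rule mult_nonneg_nonpos) (use x basics(2) in auto)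
  qed
  have x2: "(t - b1)^2 \<le> \<delta>^2" using x by (intro sq_le) auto
  have cx2: "0 \<le> (c1/2) * (t - b1)^2" "(c1/2) * (t - b1)^2 \<le> c1 * \<delta>^2"
  proof -
    show "0 \<le> (c1/2) * (t - b1)^2" using basics(2) by simp
    have "(c1/2) * (t - b1)^2 \<le> (c1/2) * \<delta>^2" by (rule mult_left_mono) (use x2 basics(2) in auto)
    also have "\<dots> \<le> c1 * \<delta>^2" using basics(2) by simp
    finally show "(c1/2) * (t - b1)^2 \<le> c1 * \<delta>^2" .
  qed
  have d2: "\<delta>^2 \<le> \<delta>" using dpos by (simp add: power2_eq_square mult_left_le_one_le)
  have E3d: "E3 * \<delta>^2 \<le> E3 * \<delta>" using d2 basics(8) by (simp add: mult_left_mono)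
  have "\<bar>Fg 0 t - y1\<bar> \<le> \<eta>"
  proof -
    have e: "Fg 0 t - y1 = s * (t - b1) + (c1/2) * (t - b1)^2 - (1 - sigA 0 t) * g0"
      unfolding P0 g0_def M0 by (simp add: field_simps)
    show ?thesis using C3 sx cx2 b00 unfolding e s_def[symmetric] c1_def[symmetric] abs_le_iff by linarith
  qed
  moreover have "\<bar>Fg 1 t - s\<bar> \<le> \<eta>"
  proof -
    have e: "Fg 1 t - s = c1 * (t - b1) - (1 - sigA 0 t) * g1 + sigA 1 t * g0"
      unfolding P1' g1_def M1 by (simp add: algebra_simps)
    have "\<bar>(1 - sigA 0 t) * g1\<bar> \<le> E3 * \<delta>^2"
      using abs_mult_le[OF _ g1, of "1 - sigA 0 t" 1] sig_bounds(1,2)[of t] by simp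
    moreover have "(1 + 2*BS)*E3*\<delta>^2 = E3*\<delta>^2 + 2*BS*E3*\<delta>^2" by (simp add: algebra_simps)
    moreover have "0 \<le> c1 * \<delta>" using basics(2) dpos by simp
    ultimately show ?thesis using C2 cx b10 unfolding e s_def[symmetric] c1_def[symmetric] abs_le_iff
      by linarith
  qed
  moreover have "Fg 2 t \<le> c1 + \<eta>"
  proof -
    have "F1 2 t \<le> c1 + E3 * \<delta>" using tay1_2[OF t'] by (simp add: abs_le_iff)
    then show ?thesis using C1 b02 b11 b20 unfolding P2 c1_def[symmetric] abs_le_iff by (simp add: algebra_simps)
  qed
  ultimately show ?thesis by (rule near1)
qed

end


context glue begin

lemma Fg_mid: "b1 - \<delta>/2 \<le> t \<Longrightarrow> t \<le> a2 + \<delta>/2 \<Longrightarrow> Fg k t = Mj k t"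
  by (cases "t \<le> b1 - \<delta>/2") (auto simp: Fg_def G23_def P1_at_right)

lemma Fg_P3: "a2 + \<delta>/2 \<le> t \<Longrightarrow> Fg k t = P3 k t"
proof -
  assume t: "a2 + \<delta>/2 \<le> t"
  have "\<not> t \<le> b1 - \<delta>/2" using t dpos by auto
  then show ?thesis using t by (cases "t \<le> a2 + \<delta>/2") (auto simp: Fg_def G23_def P3_at_left)
qed

lemma d_small: "\<delta>^2 \<le> \<delta>" "\<delta>^4 \<le> \<delta>^2 / 2" "w \<le> \<delta>"
proof -
  show d2: "\<delta>^2 \<le> \<delta>" using dpos by (simp add: power2_eq_square mult_left_le_one_le)
  have "\<delta>^2 \<le> 1/4" using dpos power_mono[of \<delta> "1/2" 2] by (simp add: power2_eq_square)
  then have "\<delta>^2 * \<delta>^2 \<le> (1/4) * \<delta>^2" by (intro mult_right_mono) auto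
  moreover have "\<delta>^4 = \<delta>^2 * \<delta>^2" by (simp add: power4_eq_xxxx power2_eq_square)
  moreover have "0 \<le> \<delta>^4" by simp
  ultimately show "\<delta>^4 \<le> \<delta>^2 / 2" by linarith
  show "w \<le> \<delta>" using basics(11) dpos by simp
qed

lemma R1: assumes t: "t \<in> {a1..b1 - \<delta>}" shows "good t"
proof -
  have tt: "t \<in> {a1..b1}" using t dpos by auto
  have "Fg k t = F1 k t" for k using t by (simp add: Fg_left)
  then show ?thesis using I1 II1 tt by (simp add: good_def warped_psc_def)
qed

lemma R7: assumes t: "t \<in> {a2 + \<delta>..b2}" shows "good t"
proof -
  have tt: "t \<in> {a2..b2}" using t dpos by auto
  have "Fg k t = F2 k t" for k using t by (simp add: Fg_right)
  then show ?thesis using I2 II2 tt by (simp add: good_def warped_psc_def)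
qed

lemma R3: assumes t: "t \<in> {b1 - \<delta>/2..b1 + \<delta>}" shows "good t"
proof -
  have Fk: "Fg k t = Mj k t" for k by (rule Fg_mid) (use t dpos in auto)
  have uB: "(t - a2) / w + J0 \<le> 0" by (rule uB_nonpos) (use t dpos in auto)
  define u where "u = (t - b1) / w + J0"
  define x where "x = t - b1"
  have wpos: "w > 0" by (rule basics(10))
  have xw: "x = w * (u - J0)" using wpos by (simp add: u_def x_def)
  have x: "-\<delta>/2 \<le> x" "x \<le> \<delta>" using t by (auto simp: x_def)
  have M0: "Fg 0 t = y1 + s * x + (c1/2) * x^2 - c1 * (w^2 * Sig2D 0 u)"
   and M1: "Fg 1 t = s + c1 * x - c1 * (w * SigD 0 u)" and M2: "Fg 2 t = c1 - c1 * SD 0 u"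
    unfolding Fk using uB by (subst Mj_012; simp add: Sig2D_nonpos SigD_nonpos SD_nonpos u_def x_def)+
  have "0 \<le> c1 * SD 0 u" using SD_01[of u] basics(2) by simp
  then have y'': "Fg 2 t \<le> c1 + \<eta>"
    using eta unfolding M2 by linarith
  have "\<bar>Fg 1 t - s\<bar> \<le> c1 * \<delta>"
  proof -
    have e: "Fg 1 t - s = c1 * (w * (u - J0 - SigD 0 u))" unfolding M1 xw by (simp add: algebra_simps)
    have up: "w * (u - J0 - SigD 0 u) \<le> 0" using Sig_shift_upper[of u] wpos by (simp add: mult_nonneg_nonpos)
    have "w * (min u 0 - 1) \<le> w * (u - J0 - SigD 0 u)" using Sig_shift_lower[of u] wpos by (intro mult_left_mono) auto
    moreover have "w * (min u 0 - 1) = min (w * u) 0 - w"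
      using min_mult_distrib_left[of w u 0] wpos by (simp add: right_diff_distrib)
    moreover have "w * u = x + J0 * w" using xw by (simp add: algebra_simps)
    moreover have "J0 * w \<ge> 0" using J0_01 wpos by simp
    moreover have "min (w * u) 0 \<ge> -\<delta>/2" using calculation(3,4) x dpos by (simp add: min_def)
    ultimately have lo: "- \<delta> \<le> w * (u - J0 - SigD 0 u)" using basics(11) by linarith
    have "c1 * (- \<delta>) \<le> c1 * (w * (u - J0 - SigD 0 u))" using lo basics(2) by (intro mult_left_mono) auto
    moreover have "c1 * (w * (u - J0 - SigD 0 u)) \<le> 0" using up basics(2) by (simp add: mult_nonneg_nonpos)
    ultimately show ?thesis unfolding e abs_le_iff by simp
  qed
  then have y': "\<bar>Fg 1 t - s\<bar> \<le> \<eta>"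
  proof -
    have "0 \<le> (1 + 2*BS)*E3*\<delta>^2" using basics(8,9) by simp
    then show "\<bar>Fg 1 t - s\<bar> \<le> c1 * \<delta> \<Longrightarrow> \<bar>Fg 1 t - s\<bar> \<le> \<eta>" using C2 unfolding c1_def[symmetric] by linarith
  qed
  have S2: "\<bar>w^2 * Sig2D 0 u\<bar> \<le> \<delta>^2/2 + \<bar>kap\<bar> * \<delta>^4"
  proof (cases "u \<le> 0")
    case True then show ?thesis by (simp add: Sig2D_nonpos)
  next
    case False
    show ?thesis
    proof (cases "u \<le> 1")
      case True
      have "u * u \<le> 1" using False True by (intro mult_le_one) auto
      then have b: "0 \<le> Sig2D 0 u" "Sig2D 0 u \<le> 1"
        using Sig2_bounds[of u] False by auto
      have "w^2 * Sig2D 0 u \<le> w^2 * 1" using b by (intro mult_left_mono) auto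
      moreover have "w^2 = \<delta>^4" by (simp add: basics(12) power_mult[symmetric])
      moreover have "0 \<le> w^2 * Sig2D 0 u" using b by simp
      moreover have "0 \<le> \<bar>kap\<bar> * \<delta>^4" by simp
      ultimately show ?thesis using d_small(2) by (simp only: abs_le_iff) linarith
    next
      case False
      have "w^2 * Sig2D 0 u = x^2/2 + kap * w^2"
        using Sig2_ge1[of u] False unfolding xw by (simp add: power2_eq_square algebra_simps)
      moreover have "x^2 \<le> \<delta>^2" using x dpos by (intro sq_le) auto
      moreover have "\<bar>kap * w^2\<bar> \<le> \<bar>kap\<bar> * \<delta>^4"
        by (simp add: abs_mult basics(12) power_mult[symmetric])
      moreover have "0 \<le> x^2" by simp
      ultimately show ?thesis by (simp only: abs_le_iff) linarith
    qed
  qed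
  have y: "\<bar>Fg 0 t - y1\<bar> \<le> \<eta>"
  proof -
    have e: "Fg 0 t - y1 = s * x + (c1/2) * x^2 - c1 * (w^2 * Sig2D 0 u)" unfolding M0 by simp
    have sx: "\<bar>s * x\<bar> \<le> s * \<delta>" using x basics(1) by (simp add: abs_mult mult_left_mono)
    have x2: "x^2 \<le> \<delta>^2" using x dpos by (intro sq_le) auto
    have cx2: "0 \<le> (c1/2) * x^2" "(c1/2) * x^2 \<le> c1 * (\<delta>^2/2)"
      using x2 basics(2) by (simp_all add: mult_left_mono)
    have cS: "\<bar>c1 * (w^2 * Sig2D 0 u)\<bar> \<le> c1 * (\<delta>^2/2 + \<bar>kap\<bar> * \<delta>^4)"
      using S2 basics(2) by (simp add: abs_mult mult_left_mono)
    have "c1 * (\<delta>^2/2 + \<bar>kap\<bar> * \<delta>^4) + c1 * (\<delta>^2/2) = c1 * \<delta>^2 + c1 * \<bar>kap\<bar> * \<delta>^4"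
      by (simp add: algebra_simps)
    then show ?thesis using C4 sx cx2 cS unfolding e s_def[symmetric] c1_def[symmetric] abs_le_iff by linarith
  qed
  show ?thesis by (rule near1[OF y y' y''])
qed


lemma R4: assumes t: "t \<in> {b1 + \<delta>..a2 - \<delta>}" shows "good t"
proof -
  have Fk: "Fg k t = Mj k t" for k by (rule Fg_mid) (use t dpos in auto)
  have uB: "(t - a2) / w + J0 \<le> 0" by (rule uB_nonpos) (use t dpos in auto)
  define u where "u = (t - b1) / w + J0"
  define x where "x = t - b1"
  have wpos: "w > 0" by (rule basics(10))
  have xw: "x = w * (u - J0)" using wpos by (simp add: u_def x_def)
  have u1: "1 \<le> u" unfolding u_def by (rule uA_ge1) (use t in auto)
  have M0: "Fg 0 t = y1 + s * x + (c1/2) * x^2 - c1 * (w^2 * Sig2D 0 u)"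
   and M1: "Fg 1 t = s + c1 * x - c1 * (w * SigD 0 u)" and M2: "Fg 2 t = c1 - c1 * SD 0 u"
    unfolding Fk using uB by (subst Mj_012; simp add: Sig2D_nonpos SigD_nonpos SD_nonpos u_def x_def)+
  have y'': "Fg 2 t = 0" unfolding M2 using SD_ge1[OF u1] by simp
  have wS: "w * SigD 0 u = x" using Sig_ge1'[OF u1] xw by simp
  have y': "Fg 1 t = s" unfolding M1 wS by simp
  have w2S: "w^2 * Sig2D 0 u = x^2/2 + kap * w^2"
    using Sig2_ge1[OF u1] unfolding xw by (simp add: power2_eq_square algebra_simps)
  have y0: "Fg 0 t = y1 + s * x - c1 * kap * w^2"
    unfolding M0 w2S by (simp add: algebra_simps)
  have "0 \<le> s * x" using t basics(1) dpos by (intro mult_nonneg_nonneg) (auto simp: x_def)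
  moreover have "\<bar>c1 * kap * w^2\<bar> \<le> c1 * \<bar>kap\<bar> * \<delta>^4"
    using basics(2) by (simp add: abs_mult basics(12) power_mult[symmetric])
  moreover have "0 \<le> s * \<delta> + c1 * \<delta>^2" using basics(1,2) dpos by simp
  ultimately have ypos: "0 < Fg 0 t" using C4 eta unfolding y0 y1_def s_def c1_def abs_le_iff by linarith
  have cnd: "2 * (y1 + \<eta>) * (c1 + \<eta>) < (real n - 1) * (1 - (s + \<eta>)^2)"
    using cond1 by (simp add: y1_def c1_def s_def)
  have "0 < warped_scal n (Fg 0 t) (Fg 1 t) (Fg 2 t)"
    by (rule good_gen[OF ypos _ _ _ _ cnd]) (use y' y'' basics eta in auto)
  then show ?thesis unfolding good_def using ypos y' basics by simp
qed

lemma R5: assumes t: "t \<in> {a2 - \<delta>..a2 + \<delta>/2}" shows "good t"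
proof -
  have Fk: "Fg k t = Mj k t" for k by (rule Fg_mid) (use t dpos in auto)
  define u where "u = (t - b1) / w + J0"
  define v where "v = (t - a2) / w + J0"
  define x where "x = t - b1"
  define x2 where "x2 = t - a2"
  have wpos: "w > 0" by (rule basics(10))
  have xw: "x = w * (u - J0)" using wpos by (simp add: u_def x_def)
  have xw2: "x2 = w * (v - J0)" using wpos by (simp add: v_def x2_def)
  have u1: "1 \<le> u" unfolding u_def by (rule uA_ge1) (use t dpos in auto)
  have M0: "Fg 0 t = y1 + s * x + (c1/2) * x^2 - c1 * (w^2 * Sig2D 0 u) + c2 * (w^2 * Sig2D 0 v)"
   and M1: "Fg 1 t = s + c1 * x - c1 * (w * SigD 0 u) + c2 * (w * SigD 0 v)"
   and M2: "Fg 2 t = c1 - c1 * SD 0 u + c2 * SD 0 v"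
    unfolding Fk by (subst Mj_012; simp add: u_def x_def v_def)+
  have y'': "Fg 2 t \<le> c2 + \<eta>"
  proof -
    have "c2 * SD 0 v \<le> c2 * 1" using SD_01[of v] basics(3) by (intro mult_left_mono) auto
    then show ?thesis unfolding M2 using SD_ge1[OF u1] eta by simp
  qed
  have Sv: "0 \<le> w * SigD 0 v" "w * SigD 0 v \<le> \<delta>"
  proof -
    show "0 \<le> w * SigD 0 v"
      using Sig_bounds[of v] SigD_nonpos[of v 0] wpos by (cases "v \<le> 0") auto
    show "w * SigD 0 v \<le> \<delta>"
    proof (cases "v \<le> 0")
      case True then show ?thesis using SigD_nonpos[of v 0] dpos by simp
    next
      case False
      have "w * SigD 0 v \<le> w * v" using Sig_bounds[of v] False wpos by (intro mult_left_mono) auto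
      also have "w * v = x2 + J0 * w" using xw2 by (simp add: algebra_simps)
      also have "J0 * w \<le> 1 * w" using J0_01 wpos by (intro mult_right_mono) auto
      then have "x2 + J0 * w \<le> \<delta>/2 + \<delta>/2" using t basics(11) by (simp add: x2_def)
      finally show ?thesis by simp
    qed
  qed
  have y': "\<bar>Fg 1 t - s\<bar> \<le> \<eta>"
  proof -
    have wS: "w * SigD 0 u = x" using Sig_ge1'[OF u1] xw by simp
    have e: "Fg 1 t - s = c2 * (w * SigD 0 v)" unfolding M1 wS by simp
    have "c2 * (w * SigD 0 v) \<le> c2 * \<delta>" using Sv basics(3) by (intro mult_left_mono) auto
    moreover have "0 \<le> c2 * (w * SigD 0 v)" using Sv basics(3) by simp
    moreover have "0 \<le> E3*\<delta>^2 + 2*BS*(E3*\<delta>^2 + (F1 2 b1 + F2 2 a2)*\<bar>kap\<bar>*\<delta>^3)"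
      using basics(2,3,8,9) dpos unfolding c1_def c2_def by simp
    ultimately show ?thesis using C8 unfolding e c2_def abs_le_iff by linarith
  qed
  have S2: "0 \<le> w^2 * Sig2D 0 v" "w^2 * Sig2D 0 v \<le> \<delta>^2"
  proof -
    show "0 \<le> w^2 * Sig2D 0 v"
      using Sig2_bounds[of v] Sig2D_nonpos[of v 0] by (cases "v \<le> 0") auto
    show "w^2 * Sig2D 0 v \<le> \<delta>^2"
    proof (cases "v \<le> 0")
      case True then show ?thesis using Sig2D_nonpos[of v 0] by simp
    next
      case False
      have "w^2 * Sig2D 0 v \<le> w^2 * (v * v)" using Sig2_bounds[of v] False by (intro mult_left_mono) auto
      also have "w^2 * (v * v) = (w * v)^2" by (simp add: power2_eq_square)
      also have "(w * v)^2 \<le> \<delta>^2"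
      proof (rule sq_le)
        have "w * v = x2 + J0 * w" using xw2 by (simp add: algebra_simps)
        moreover have "J0 * w \<le> 1 * w" using J0_01 wpos by (intro mult_right_mono) auto
        moreover have "0 \<le> w * v" using False wpos by simp
        ultimately show "\<bar>w * v\<bar> \<le> \<delta>" using t basics(11) by (simp add: x2_def)
      qed
      finally show ?thesis .
    qed
  qed
  have y: "\<bar>Fg 0 t - y2\<bar> \<le> \<eta>"
  proof -
    have w2S: "w^2 * Sig2D 0 u = x^2/2 + kap * w^2"
      using Sig2_ge1[OF u1] unfolding xw by (simp add: power2_eq_square algebra_simps)
    have "y1 + s * x = y2 + s * x2" using basics(7) by (simp add: x_def x2_def algebra_simps)
    then have e: "Fg 0 t - y2 = s * x2 - c1 * kap * w^2 + c2 * (w^2 * Sig2D 0 v)"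
      unfolding M0 w2S by (simp add: algebra_simps)
    have "\<bar>x2\<bar> \<le> \<delta>" using t dpos by (auto simp: x2_def abs_le_iff)
    then have sx: "\<bar>s * x2\<bar> \<le> s * \<delta>" using basics(1) by (simp add: abs_mult mult_left_mono)
    have k: "\<bar>c1 * kap * w^2\<bar> \<le> c1 * \<bar>kap\<bar> * \<delta>^4"
      using basics(2) by (simp add: abs_mult basics(12) power_mult[symmetric])
    have c: "0 \<le> c2 * (w^2 * Sig2D 0 v)" "c2 * (w^2 * Sig2D 0 v) \<le> c2 * \<delta>^2"
      using S2 basics(3) by (simp_all add: mult_left_mono)
    show ?thesis using C7 sx k c unfolding e s_def[symmetric] c1_def[symmetric] c2_def[symmetric] abs_le_iff by linarith
  qed
  show ?thesis by (rule near2[OF y y' y''])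
qed


lemma R6: assumes t: "t \<in> {a2 + \<delta>/2..a2 + \<delta>}" shows "good t"
proof -
  have Fk: "Fg k t = P3 k t" for k by (rule Fg_P3) (use t in auto)
  define u where "u = (t - b1) / w + J0"
  define v where "v = (t - a2) / w + J0"
  define x where "x = t - b1"
  define x2 where "x2 = t - a2"
  have wpos: "w > 0" by (rule basics(10))
  have xw: "x = w * (u - J0)" using wpos by (simp add: u_def x_def)
  have xw2: "x2 = w * (v - J0)" using wpos by (simp add: v_def x2_def)
  have u1: "1 \<le> u" unfolding u_def by (rule uA_ge1) (use t dpos in auto)
  have v1: "1 \<le> v" unfolding v_def by (rule uB_ge1) (use t dpos in auto)
  have tt: "t \<in> {a2..a2 + \<delta>}" using t dpos by auto
  have x2b: "\<delta>/2 \<le> x2" "x2 \<le> \<delta>" using t by (auto simp: x2_def)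
  have M0': "Mj 0 t = y1 + s * x + (c1/2) * x^2 - c1 * (w^2 * Sig2D 0 u) + c2 * (w^2 * Sig2D 0 v)"
   and M1': "Mj 1 t = s + c1 * x - c1 * (w * SigD 0 u) + c2 * (w * SigD 0 v)"
   and M2': "Mj 2 t = c1 - c1 * SD 0 u + c2 * SD 0 v"
    by (subst Mj_012; simp add: u_def x_def v_def)+
  have w2S: "w^2 * Sig2D 0 u = x^2/2 + kap * w^2"
    using Sig2_ge1[OF u1] unfolding xw by (simp add: power2_eq_square algebra_simps)
  have w2S2: "w^2 * Sig2D 0 v = x2^2/2 + kap * w^2"
    using Sig2_ge1[OF v1] unfolding xw2 by (simp add: power2_eq_square algebra_simps)
  have wS: "w * SigD 0 u = x" using Sig_ge1'[OF u1] xw by simp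
  have wS2: "w * SigD 0 v = x2" using Sig_ge1'[OF v1] xw2 by simp
  define e2c where "e2c = (c2 - c1) * kap * w^2"
  have "y1 + s * x = y2 + s * x2" using basics(7) by (simp add: x_def x2_def algebra_simps)
  then have M0: "Mj 0 t = y2 + s * x2 + (c2/2) * x2^2 + e2c"
    unfolding M0' w2S w2S2 e2c_def by (simp add: algebra_simps)
  have M1: "Mj 1 t = s + c2 * x2" unfolding M1' wS wS2 by simp
  have M2: "Mj 2 t = c2" unfolding M2' using SD_ge1[OF u1] SD_ge1[OF v1] by simp
  have e2c: "\<bar>e2c\<bar> \<le> (c1 + c2) * \<bar>kap\<bar> * \<delta>^4"
  proof -
    have "\<bar>c2 - c1\<bar> \<le> c1 + c2" using basics(2,3) by simp
    then have "\<bar>c2 - c1\<bar> * (\<bar>kap\<bar> * \<delta>^4) \<le> (c1 + c2) * (\<bar>kap\<bar> * \<delta>^4)" by (intro mult_right_mono) auto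
    then show ?thesis unfolding e2c_def by (simp add: abs_mult basics(12) power_mult[symmetric] mult.assoc)
  qed
  define g0 where "g0 = F2 0 t + -1 * Mj 0 t"
  define g1 where "g1 = F2 1 t + -1 * Mj 1 t"
  define g2 where "g2 = F2 2 t + -1 * Mj 2 t"
  define G0 where "G0 = E3 * \<delta>^3 + (c1 + c2) * \<bar>kap\<bar> * \<delta>^4"
  have g0: "\<bar>g0\<bar> \<le> G0"
  proof -
    have "g0 = (F2 0 t - (y2 + s * (t - a2) + (c2/2) * (t - a2)^2)) - e2c"
      unfolding g0_def M0 x2_def by simp
    then show ?thesis using tay2_0[OF tt] e2c unfolding G0_def abs_le_iff by linarith
  qed
  have g1: "\<bar>g1\<bar> \<le> E3 * \<delta>^2" using tay2_1[OF tt] unfolding g1_def M1 x2_def by simp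
  have g2: "\<bar>g2\<bar> \<le> E3 * \<delta>" using tay2_2[OF tt] unfolding g2_def M2 by simp
  have P0: "Fg 0 t = Mj 0 t + sigB 0 t * g0" unfolding Fk P3_def g0_def
    using sum_012[of "\<lambda>i. sigB i t" "\<lambda>j. F2 j t + -1 * Mj j t"] by simp
  have P1': "Fg 1 t = Mj 1 t + (sigB 0 t * g1 + sigB 1 t * g0)" unfolding Fk P3_def g0_def g1_def
    using sum_012[of "\<lambda>i. sigB i t" "\<lambda>j. F2 j t + -1 * Mj j t"] by simp
  have P2: "Fg 2 t = Mj 2 t + (sigB 0 t * g2 + 2 * sigB 1 t * g1 + sigB 2 t * g0)" unfolding Fk P3_def g0_def g1_def g2_def
    using sum_012[of "\<lambda>i. sigB i t" "\<lambda>j. F2 j t + -1 * Mj j t"] by simp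
  have s0: "\<bar>sigB 0 t\<bar> \<le> 1" using sig_bounds(5,6)[of t] by simp
  have b10: "\<bar>sigB 1 t * g0\<bar> \<le> 2 * BS * (E3 * \<delta>^2 + (c1 + c2) * \<bar>kap\<bar> * \<delta>^3)"
  proof -
    have "\<bar>sigB 1 t * g0\<bar> \<le> (al * BS) * G0" by (rule abs_mult_le[OF sig_bounds(7) g0])
    also have "\<dots> = (al * \<delta>) * BS * (E3 * \<delta>^2 + (c1 + c2) * \<bar>kap\<bar> * \<delta>^3)"
      by (simp add: G0_def power2_eq_square power3_eq_cube power4_eq_xxxx algebra_simps)
    finally show ?thesis using al_facts by simp
  qed
  have b20: "\<bar>sigB 2 t * g0\<bar> \<le> 4 * BS * (E3 * \<delta> + (c1 + c2) * \<bar>kap\<bar> * \<delta>^2)"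
  proof -
    have "\<bar>sigB 2 t * g0\<bar> \<le> (al^2 * BS) * G0" by (rule abs_mult_le[OF sig_bounds(8) g0])
    also have "\<dots> = (al^2 * \<delta>^2) * BS * (E3 * \<delta> + (c1 + c2) * \<bar>kap\<bar> * \<delta>^2)"
      by (simp add: G0_def power2_eq_square power3_eq_cube power4_eq_xxxx algebra_simps)
    finally show ?thesis using al_facts by simp
  qed
  have b11: "\<bar>sigB 1 t * g1\<bar> \<le> 2 * BS * E3 * \<delta>"
  proof -
    have "\<bar>sigB 1 t * g1\<bar> \<le> (al * BS) * (E3 * \<delta>^2)" by (rule abs_mult_le[OF sig_bounds(7) g1])
    also have "\<dots> = (al * \<delta>) * BS * E3 * \<delta>" by (simp add: power2_eq_square)
    finally show ?thesis using al_facts by simp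
  qed
  have b02: "\<bar>sigB 0 t * g2\<bar> \<le> E3 * \<delta>" using abs_mult_le[OF s0 g2] by simp
  have b01: "\<bar>sigB 0 t * g1\<bar> \<le> E3 * \<delta>^2" using abs_mult_le[OF s0 g1] by simp
  have b00: "\<bar>sigB 0 t * g0\<bar> \<le> G0" using abs_mult_le[OF s0 g0] by simp
  have y'': "Fg 2 t \<le> c2 + \<eta>"
  proof -
    have "(1 + 8*BS)*E3*\<delta> + 4*BS*(c1 + c2)*\<bar>kap\<bar>*\<delta>^2
          = E3 * \<delta> + 2 * (2 * BS * E3 * \<delta>) + 4 * BS * (E3 * \<delta> + (c1 + c2) * \<bar>kap\<bar> * \<delta>^2)"
      by (simp add: algebra_simps)
    then show ?thesis using C9 b02 b11 b20 unfolding P2 M2 c1_def[symmetric] c2_def[symmetric] abs_le_iff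
      by linarith
  qed
  have y': "\<bar>Fg 1 t - s\<bar> \<le> \<eta>"
  proof -
    have "c2 * x2 \<le> c2 * \<delta>" using x2b basics(3) by (intro mult_left_mono) auto
    moreover have "0 \<le> c2 * x2" using x2b basics(3) dpos by simp
    ultimately show ?thesis using C8 b01 b10 unfolding P1' M1 c1_def[symmetric] c2_def[symmetric] abs_le_iff
      by linarith
  qed
  have y: "\<bar>Fg 0 t - y2\<bar> \<le> \<eta>"
  proof -
    have "s * x2 \<le> s * \<delta>" using x2b basics(1) by (intro mult_left_mono) auto
    moreover have "0 \<le> s * x2" using x2b basics(1) dpos by simp
    moreover have "x2^2 \<le> \<delta>^2" using x2b dpos by (intro sq_le) auto
    then have "(c2/2) * x2^2 \<le> (c2/2) * \<delta>^2" using basics(3) by (intro mult_left_mono) auto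
    moreover have "0 \<le> (c2/2) * x2^2" using basics(3) by simp
    moreover have "0 \<le> c2 * \<delta>^2" using basics(3) by simp
    ultimately show ?thesis using C10 e2c b00 unfolding P0 M0 G0_def s_def[symmetric] c1_def[symmetric] c2_def[symmetric] abs_le_iff
      by linarith
  qed
  show ?thesis by (rule near2[OF y y' y''])
qed

lemma all_good: "t \<in> {a1..b2} \<Longrightarrow> good t"
proof -
  assume t: "t \<in> {a1..b2}"
  consider "t \<le> b1 - \<delta>" | "b1 - \<delta> \<le> t \<and> t \<le> b1 - \<delta>/2" | "b1 - \<delta>/2 \<le> t \<and> t \<le> b1 + \<delta>"
    | "b1 + \<delta> \<le> t \<and> t \<le> a2 - \<delta>" | "a2 - \<delta> \<le> t \<and> t \<le> a2 + \<delta>/2" | "a2 + \<delta>/2 \<le> t \<and> t \<le> a2 + \<delta>"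
    | "a2 + \<delta> \<le> t" by linarith
  then show ?thesis
  proof cases
    case 1 then show ?thesis using t R1 by auto
  next
    case 2 then show ?thesis using R2 by auto
  next
    case 3 then show ?thesis using R3 by auto
  next
    case 4 then show ?thesis using R4 by auto
  next
    case 5 then show ?thesis using R5 by auto
  next
    case 6 then show ?thesis using R6 by auto
  next
    case 7 then show ?thesis using t R7 by auto
  qed
qed

lemma result:
  "\<exists>F :: nat \<Rightarrow> real \<Rightarrow> real.
           smooth_jet_on F a1 b2
         \<and> (\<forall>t\<in>{a1..b2}. F 0 t > 0 \<and> F 1 t > 0)
         \<and> (\<forall>t\<in>{a1..(a1 + b1) / 2}. F 0 t = F1 0 t)
         \<and> (\<forall>t\<in>{(a2 + b2) / 2..b2}. F 0 t = F2 0 t)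
         \<and> warped_psc n F a1 b2"
proof (intro exI conjI ballI)
  show "smooth_jet_on Fg a1 b2" unfolding smooth_jet_on_jet by (rule Fg_jet)
  fix t assume "t \<in> {a1..b2}" then show "Fg 0 t > 0" using all_good good_def by blast
next
  fix t assume "t \<in> {a1..b2}" then show "Fg 1 t > 0" using all_good good_def by blast
next
  fix t assume "t \<in> {a1..(a1 + b1) / 2}" then show "Fg 0 t = F1 0 t" using dpos by (intro Fg_left) auto
next
  fix t assume "t \<in> {(a2 + b2) / 2..b2}" then show "Fg 0 t = F2 0 t" using dpos by (intro Fg_right) auto
next
  show "warped_psc n Fg a1 b2" unfolding warped_psc_def using all_good good_def by blast
qed

end


lemma ev0:
  assumes "(f \<longlongrightarrow> 0) (at_right (0::real))" "0 < (e::real)"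
  shows "\<forall>\<^sub>F d in at_right 0. f d \<le> e"
  using order_tendstoD(2)[OF assms] by (auto elim: eventually_mono)

lemma ev_pos:
  assumes "(f \<longlongrightarrow> L) (at_right (0::real))" "0 < (L::real)"
  shows "\<forall>\<^sub>F d in at_right 0. 0 < f d"
  using order_tendstoD(1)[OF assms] .

lemma ev_witness:
  assumes "\<forall>\<^sub>F d in at_right (0::real). P d"
  shows "\<exists>d. P d"
  using eventually_happens[OF assms] trivial_limit_at_right_real by auto

theorem lemma4p4:
  fixes n :: nat and a1 b1 a2 b2 :: real and F1 F2 :: "nat \<Rightarrow> real \<Rightarrow> real"
  assumes n: "n \<ge> 3"
    and int1: "a1 < b1" and int2: "a2 < b2"
    and smooth1: "smooth_jet_on F1 a1 b1"
    and smooth2: "smooth_jet_on F2 a2 b2"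
    and I1: "\<forall>t\<in>{a1..b1}. F1 0 t > 0 \<and> F1 1 t > 0 \<and> F1 2 t > 0"
    and I2: "\<forall>t\<in>{a2..b2}. F2 0 t > 0 \<and> F2 1 t > 0 \<and> F2 2 t > 0"
    and II1: "warped_psc n F1 a1 b1"
    and II2: "warped_psc n F2 a2 b2"
    and III: "F1 0 b1 < F2 0 a2" "F1 1 b1 = F2 1 a2"
    and pos: "a2 - b1 = (F2 0 a2 - F1 0 b1) / F1 1 b1"
  shows "\<exists>F :: nat \<Rightarrow> real \<Rightarrow> real.
           smooth_jet_on F a1 b2
         \<and> (\<forall>t\<in>{a1..b2}. F 0 t > 0 \<and> F 1 t > 0)
         \<and> (\<forall>t\<in>{a1..(a1 + b1) / 2}. F 0 t = F1 0 t)
         \<and> (\<forall>t\<in>{(a2 + b2) / 2..b2}. F 0 t = F2 0 t)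
         \<and> warped_psc n F a1 b2"
proof -
  have j1: "jet F1 {a1..b1}" using smooth1 by (simp add: smooth_jet_on_jet)
  have j2: "jet F2 {a2..b2}" using smooth2 by (simp add: smooth_jet_on_jet)
  obtain E1 where E1: "\<forall>t\<in>{a1..b1}. \<bar>F1 3 t\<bar> \<le> E1" using jet_bounded[OF j1] by blast
  obtain E2 where E2: "\<forall>t\<in>{a2..b2}. \<bar>F2 3 t\<bar> \<le> E2" using jet_bounded[OF j2] by blast
  define E3 where "E3 = max E1 E2"
  have E3: "\<forall>t\<in>{a1..b1}. \<bar>F1 3 t\<bar> \<le> E3" "\<forall>t\<in>{a2..b2}. \<bar>F2 3 t\<bar> \<le> E3"
    using E1 E2 by (auto simp: E3_def intro: le_max_iff_disj[THEN iffD2])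
  obtain BS where BS: "\<forall>x. \<bar>SD 1 x\<bar> \<le> BS \<and> \<bar>SD 2 x\<bar> \<le> BS" using SD_bounds by blast
  define s where "s = F1 1 b1"
  define c1 where "c1 = F1 2 b1"
  define c2 where "c2 = F2 2 a2"
  define y1 where "y1 = F1 0 b1"
  define y2 where "y2 = F2 0 a2"
  have b1in: "b1 \<in> {a1..b1}" and a2in: "a2 \<in> {a2..b2}" using int1 int2 by auto
  have n1: "n \<ge> 1" using n by simp
  have pos1: "y1 > 0" "s > 0" "c1 > 0" using I1 b1in by (auto simp: y1_def s_def c1_def)
  have pos2: "y2 > 0" "c2 > 0" using I2 a2in by (auto simp: y2_def c2_def)
  have "0 < warped_scal n (F1 0 b1) (F1 1 b1) (F1 2 b1)" using II1 b1in unfolding warped_psc_def by blast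
  then have h1: "2 * y1 * c1 < (real n - 1) * (1 - s^2)"
    using psc_iff[OF pos1(1) n1] by (simp add: y1_def s_def c1_def)
  have "0 < warped_scal n (F2 0 a2) (F2 1 a2) (F2 2 a2)" using II2 a2in unfolding warped_psc_def by blast
  then have h2: "2 * y2 * c2 < (real n - 1) * (1 - s^2)"
    using psc_iff[OF pos2(1) n1] III(2) by (simp add: y2_def s_def c2_def)
  have "\<forall>\<^sub>F e in at_right 0. 0 < e \<and> e < s \<and> e < y1
      \<and> 0 < (real n - 1) * (1 - (s + e)^2) - 2 * (y1 + e) * (c1 + e)
      \<and> 0 < (real n - 1) * (1 - (s + e)^2) - 2 * (y2 + e) * (c2 + e)"
  proof (intro eventually_conj)
    show "\<forall>\<^sub>F e in at_right 0. 0 < (e::real)" by (rule eventually_at_right_less)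
    show "\<forall>\<^sub>F e in at_right 0. e < s"
      using order_tendstoD(2)[OF tendsto_ident_at[of 0 "{0<..}"] pos1(2)] by simp
    show "\<forall>\<^sub>F e in at_right 0. e < y1"
      using order_tendstoD(2)[OF tendsto_ident_at[of 0 "{0<..}"] pos1(1)] by simp
    show "\<forall>\<^sub>F e in at_right 0. 0 < (real n - 1) * (1 - (s + e)^2) - 2 * (y1 + e) * (c1 + e)"
      by (rule ev_pos[where L="(real n - 1) * (1 - (s + 0)^2) - 2 * (y1 + 0) * (c1 + 0)"])
         (use h1 in \<open>auto intro!: tendsto_eq_intros\<close>)
    show "\<forall>\<^sub>F e in at_right 0. 0 < (real n - 1) * (1 - (s + e)^2) - 2 * (y2 + e) * (c2 + e)"
      by (rule ev_pos[where L="(real n - 1) * (1 - (s + 0)^2) - 2 * (y2 + 0) * (c2 + 0)"])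
         (use h2 in \<open>auto intro!: tendsto_eq_intros\<close>)
  qed
  then obtain \<eta> where eta: "0 < \<eta>" "\<eta> < s" "\<eta> < y1"
      "0 < (real n - 1) * (1 - (s + \<eta>)^2) - 2 * (y1 + \<eta>) * (c1 + \<eta>)"
      "0 < (real n - 1) * (1 - (s + \<eta>)^2) - 2 * (y2 + \<eta>) * (c2 + \<eta>)"
    using ev_witness by blast
  have "y1 < y2" using III by (simp add: y1_def y2_def)
  then have ab: "0 < a2 - b1" using pos pos1 by (simp add: y1_def y2_def s_def)
  let ?K = "\<bar>kap\<bar>"
  have "\<forall>\<^sub>F d in at_right 0. 0 < d \<and> d \<le> 1/2 \<and> 2 * d \<le> b1 - a1 \<and> 2 * d \<le> b2 - a2 \<and> 2 * d \<le> a2 - b1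
    \<and> (2 + 8*BS)*E3*d \<le> \<eta>
    \<and> c1*d + (1 + 2*BS)*E3*d^2 \<le> \<eta>
    \<and> s*d + c1*d^2 + E3*d^3 \<le> \<eta>
    \<and> s*d + c1*d^2 + c1*?K*d^4 \<le> \<eta>
    \<and> s*d + c1*?K*d^4 + c2*d^2 \<le> \<eta>
    \<and> c2*d + E3*d^2 + 2*BS*(E3*d^2 + (c1 + c2)*?K*d^3) \<le> \<eta>
    \<and> (1 + 8*BS)*E3*d + 4*BS*(c1 + c2)*?K*d^2 \<le> \<eta>
    \<and> s*d + c2*d^2 + 2*(c1 + c2)*?K*d^4 + E3*d^3 \<le> \<eta>"
    using int1 int2 ab eta(1)
    by (intro eventually_conj eventually_at_right_less ev0; (auto intro!: tendsto_eq_intros)?)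
  then obtain \<delta> where dl: "0 < \<delta>" "\<delta> \<le> 1/2" "2 * \<delta> \<le> b1 - a1" "2 * \<delta> \<le> b2 - a2" "2 * \<delta> \<le> a2 - b1"
    "(2 + 8*BS)*E3*\<delta> \<le> \<eta>"
    "c1*\<delta> + (1 + 2*BS)*E3*\<delta>^2 \<le> \<eta>"
    "s*\<delta> + c1*\<delta>^2 + E3*\<delta>^3 \<le> \<eta>"
    "s*\<delta> + c1*\<delta>^2 + c1*?K*\<delta>^4 \<le> \<eta>"
    "s*\<delta> + c1*?K*\<delta>^4 + c2*\<delta>^2 \<le> \<eta>"
    "c2*\<delta> + E3*\<delta>^2 + 2*BS*(E3*\<delta>^2 + (c1 + c2)*?K*\<delta>^3) \<le> \<eta>"
    "(1 + 8*BS)*E3*\<delta> + 4*BS*(c1 + c2)*?K*\<delta>^2 \<le> \<eta>"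
    "s*\<delta> + c2*\<delta>^2 + 2*(c1 + c2)*?K*\<delta>^4 + E3*\<delta>^3 \<le> \<eta>"
    using ev_witness by blast
  interpret G: glue n a1 b1 a2 b2 F1 F2 \<eta> \<delta> E3 BS
    using n int1 int2 j1 j2 I1 I2 II1 II2 III pos E3 BS eta dl
    unfolding glue_def s_def c1_def c2_def y1_def y2_def by simp
  show ?thesis by (rule G.result)
qed


end
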